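(* Let $H=(V,E)$ be a finite graph, $p\in(0,1)$, $q>0$, $\mu=\mu_{p,q}$ on $\Omega_E=\{A:A\subseteq E\}$, $r\in\mathbb N$, $\Omega_V=\{0,\dots,r-1\}^V$, $\Omega_J=\Omega_V\times\Omega_E$. Let $P$ be the transition matrix of an ergodic Markov chain on $\Omega_E$ reversible w.r.t. $\mu$, and suppose $P=M\left(\prod_{i=1}^m T_i\right)M^*$, where: (i) $M$ is a stochastic $|\Omega_E|\times|\Omega_J|$ matrix with $M(A,(\sigma,B))\neq0$ only if $A=B$; (ii) with $\nu=\mu M$, each $T_i$ is a stochastic $|\Omega_J|\times|\Omega_J|$ matrix reversible w.r.t. $\nu$ with $T_i((\sigma,A),(\tau,B))\ne0$ only if $\sigma=\tau$; (iii) $M^*$ is the adjoint of $M:L_2(\nu)\to L_2(\mu)$ (and is stochastic). Suppose moreover that the $T_i$ are idempotent and pairwise commuting as operators on $L_2(\nu)$. Let $P_L=M\left(\frac1m\sum_{i=1}^m T_i\right)M^*$. Then $$\lambda(P_L)\le\lambda(P)\le 8m\log m\cdot\lambda(P_L).$$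
   Context: $\mu_{p,q}(A)\propto p^{|A|}(1-p)^{|E|-|A|}q^{c(A)}$, $c(A)$ the number of connected components of $(V,A)$. $L_2(\pi)$ denotes $\mathbb R^{\Omega}$ with inner product $\langle f,g\rangle_\pi=\sum_x f(x)g(x)\pi(x)$; a matrix acts on functions by matrix–vector multiplication. The adjoint $R^*$ of $R:S_2\to S_1$ satisfies $\langle f,Rg\rangle_{S_1}=\langle R^*f,g\rangle_{S_2}$; concretely $M^*((\sigma,A),B)=\mu(B)M(B,(\sigma,A))/\nu(\sigma,A)$. For a reversible transition matrix $Q$ with eigenvalues $1=\lambda_1\ge\lambda_2\ge\dots\ge\lambda_N$, the spectral gap is $\lambda(Q)=1-\max\{|\lambda_2|,|\lambda_N|\}$. *)

theory Defs
  imports Complex_Main "HOL-Library.FuncSet" "Jordan_Normal_Form.Char_Poly"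
begin

section \<open>Simple finite graphs and the random-cluster measure\<close>

definition finite_graph :: "'v set \<Rightarrow> 'v set set \<Rightarrow> bool" where
  "finite_graph V E \<longleftrightarrow> finite V \<and>
     (\<forall>e\<in>E. \<exists>u w. u \<in> V \<and> w \<in> V \<and> u \<noteq> w \<and> e = {u, w})"

text \<open>Connectivity relation of the spanning subgraph (V,A) and number of components c(A).\<close>
definition conn_rel :: "'v set \<Rightarrow> 'v set set \<Rightarrow> ('v \<times> 'v) set" where
  "conn_rel V A = ({(u, w). {u, w} \<in> A}\<^sup>* ) \<inter> (V \<times> V)"

definition num_components :: "'v set \<Rightarrow> 'v set set \<Rightarrow> nat" where
  "num_components V A = card (V // conn_rel V A)"

definition rc_weight :: "'v set \<Rightarrow> 'v set set \<Rightarrow> real \<Rightarrow> real \<Rightarrow> 'v set set \<Rightarrow> real" where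
  "rc_weight V E p q A = p ^ card A * (1 - p) ^ (card E - card A) * q ^ num_components V A"

definition rc_measure :: "'v set \<Rightarrow> 'v set set \<Rightarrow> real \<Rightarrow> real \<Rightarrow> 'v set set \<Rightarrow> real" where
  "rc_measure V E p q A =
     rc_weight V E p q A / (\<Sum>B\<in>Pow E. rc_weight V E p q B)"

section \<open>Matrices indexed by finite state spaces (as functions)\<close>

definition stochastic :: "'a set \<Rightarrow> 'b set \<Rightarrow> ('a \<Rightarrow> 'b \<Rightarrow> real) \<Rightarrow> bool" where
  "stochastic S1 S2 X \<longleftrightarrow>
     (\<forall>x\<in>S1. (\<forall>y\<in>S2. X x y \<ge> 0) \<and> (\<Sum>y\<in>S2. X x y) = 1)"

definition mmult :: "'b set \<Rightarrow> ('a \<Rightarrow> 'b \<Rightarrow> real) \<Rightarrow> ('b \<Rightarrow> 'c \<Rightarrow> real) \<Rightarrow> 'a \<Rightarrow> 'c \<Rightarrow> real" where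
  "mmult S X Y = (\<lambda>a c. \<Sum>b\<in>S. X a b * Y b c)"

definition mid :: "'a \<Rightarrow> 'a \<Rightarrow> real" where
  "mid = (\<lambda>a b. if a = b then 1 else 0)"

text \<open>Ordered product X1 X2 ... Xk of square matrices on S.\<close>
definition mprod_list :: "'a set \<Rightarrow> ('a \<Rightarrow> 'a \<Rightarrow> real) list \<Rightarrow> 'a \<Rightarrow> 'a \<Rightarrow> real" where
  "mprod_list S Xs = foldr (mmult S) Xs mid"

definition mpow :: "'a set \<Rightarrow> ('a \<Rightarrow> 'a \<Rightarrow> real) \<Rightarrow> nat \<Rightarrow> 'a \<Rightarrow> 'a \<Rightarrow> real" where
  "mpow S X n = mprod_list S (replicate n X)"

definition reversible :: "'a set \<Rightarrow> ('a \<Rightarrow> real) \<Rightarrow> ('a \<Rightarrow> 'a \<Rightarrow> real) \<Rightarrow> bool" where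
  "reversible S w Q \<longleftrightarrow> (\<forall>x\<in>S. \<forall>y\<in>S. w x * Q x y = w y * Q y x)"

definition irreducible_chain :: "'a set \<Rightarrow> ('a \<Rightarrow> 'a \<Rightarrow> real) \<Rightarrow> bool" where
  "irreducible_chain S Q \<longleftrightarrow> (\<forall>x\<in>S. \<forall>y\<in>S. \<exists>n. mpow S Q n x y > 0)"

definition aperiodic_chain :: "'a set \<Rightarrow> ('a \<Rightarrow> 'a \<Rightarrow> real) \<Rightarrow> bool" where
  "aperiodic_chain S Q \<longleftrightarrow> (\<forall>x\<in>S. Gcd {n. n \<ge> 1 \<and> mpow S Q n x x > 0} = (1::nat))"

definition ergodic_chain :: "'a set \<Rightarrow> ('a \<Rightarrow> 'a \<Rightarrow> real) \<Rightarrow> bool" where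
  "ergodic_chain S Q \<longleftrightarrow> stochastic S S Q \<and> irreducible_chain S Q \<and> aperiodic_chain S Q"

text \<open>nu = mu M, and the adjoint M* of M : L2(nu) -> L2(mu):
  M*(x,B) = mu(B) M(B,x) / nu(x).\<close>
definition push_measure :: "'a set \<Rightarrow> ('a \<Rightarrow> real) \<Rightarrow> ('a \<Rightarrow> 'b \<Rightarrow> real) \<Rightarrow> 'b \<Rightarrow> real" where
  "push_measure S mu M = (\<lambda>x. \<Sum>A\<in>S. mu A * M A x)"

definition adjoint :: "'a set \<Rightarrow> ('a \<Rightarrow> real) \<Rightarrow> ('a \<Rightarrow> 'b \<Rightarrow> real) \<Rightarrow> 'b \<Rightarrow> 'a \<Rightarrow> real" where
  "adjoint S mu M = (\<lambda>x B. mu B * M B x / push_measure S mu M x)"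

section \<open>Spectral gap\<close>

text \<open>A fixed enumeration of a finite state space, and the matrix in JNF form.\<close>
definition enum_list :: "'a set \<Rightarrow> 'a list" where
  "enum_list S = (SOME xs. distinct xs \<and> set xs = S)"

definition to_mat :: "'a set \<Rightarrow> ('a \<Rightarrow> 'a \<Rightarrow> real) \<Rightarrow> real mat" where
  "to_mat S Q = (let xs = enum_list S in
     mat (length xs) (length xs) (\<lambda>(i, j). Q (xs ! i) (xs ! j)))"

text \<open>Eigenvalues with multiplicity, in non-increasing order
  (lambda_1 >= lambda_2 >= ... >= lambda_N); meaningful for reversible Q,
  whose characteristic polynomial splits over the reals.\<close>
definition eigenvalues_desc :: "'a set \<Rightarrow> ('a \<Rightarrow> 'a \<Rightarrow> real) \<Rightarrow> real list" where
  "eigenvalues_desc S Q = (THE ls. sorted_wrt (\<ge>) ls \<and>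
      char_poly (to_mat S Q) = (\<Prod>l\<leftarrow>ls. [:- l, 1:]))"

text \<open>lambda(Q) = 1 - max(|lambda_2|, |lambda_N|); for a one-point space (no lambda_2)
  we use the convention lambda(Q) = 1.\<close>
definition spectral_gap :: "'a set \<Rightarrow> ('a \<Rightarrow> 'a \<Rightarrow> real) \<Rightarrow> real" where
  "spectral_gap S Q = (let ls = eigenvalues_desc S Q; N = length ls in
     if N \<ge> 2 then 1 - max \<bar>ls ! 1\<bar> \<bar>ls ! (N - 1)\<bar> else 1)"

end

theory Submission
  imports Defs "Jordan_Normal_Form.Schur_Decomposition" "HOL-Library.Multiset"
begin

definition orthonormal :: "nat \<Rightarrow> real vec list \<Rightarrow> bool" where
  "orthonormal n ws \<longleftrightarrow> set ws \<subseteq> carrier_vec n \<and>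
     (\<forall>i<length ws. \<forall>j<length ws. ws!i \<bullet> ws!j = (if i = j then 1 else 0))"

lemma orthonormal_extend:
  fixes v :: "real vec"
  assumes v: "v \<in> carrier_vec n" and v1: "v \<bullet> v = 1"
  shows "\<exists>ws. length ws = n \<and> orthonormal n ws \<and> ws ! 0 = v"
proof -
  have v0: "v \<noteq> 0\<^sub>v n" using v1 by auto
  interpret cof_vec_space n "TYPE(real)" .
  define b where "b = basis_completion v"
  note bc = basis_completion[OF v v0, folded b_def]
  define ws0 where "ws0 = gram_schmidt n b"
  note gs = gram_schmidt_result[OF bc(2) bc(4) bc(5) ws0_def]
  have len0: "length ws0 = n" using gs bc by simp
  have npos: "n > 0" using v v1 by (cases n) (auto simp: scalar_prod_def)
  from bc(6) bc(7) npos obtain vs where bv: "b = v # vs" by (cases b) auto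
  have hd0: "ws0 ! 0 = v" using gram_schmidt_hd[OF v, of vs] ws0_def bv len0 npos
    by (metis hd_conv_nth length_greater_0_conv)
  have orth0: "\<And>i j. i < n \<Longrightarrow> j < n \<Longrightarrow> ws0!i \<bullet> ws0!j = 0 \<longleftrightarrow> i \<noteq> j"
    using gs(2) len0 unfolding corthogonal_def by simp
  have carr0: "\<And>i. i < n \<Longrightarrow> ws0 ! i \<in> carrier_vec n" using gs(3) len0 by auto
  have pos0: "\<And>i. i < n \<Longrightarrow> ws0!i \<bullet> ws0!i > 0"
  proof -
    fix i assume i: "i < n"
    have "ws0!i \<bullet>c ws0!i \<ge> 0" by (rule conjugate_square_ge_0_vec)
    then show "ws0!i \<bullet> ws0!i > 0" using orth0[OF i i] by auto
  qed
  define ws where "ws = map (\<lambda>w. (1 / sqrt (w \<bullet> w)) \<cdot>\<^sub>v w) ws0"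
  have len: "length ws = n" using len0 ws_def by simp
  have wsi: "\<And>i. i < n \<Longrightarrow> ws ! i = (1 / sqrt (ws0!i \<bullet> ws0!i)) \<cdot>\<^sub>v ws0!i"
    using len0 ws_def by simp
  have carr: "set ws \<subseteq> carrier_vec n"
    using carr0 len wsi by (auto simp: in_set_conv_nth)
  have ip: "ws!i \<bullet> ws!j = (if i = j then 1 else 0)" if i: "i < n" and j: "j < n" for i j
  proof -
    have "ws!i \<bullet> ws!j = (1 / sqrt (ws0!i \<bullet> ws0!i)) * (1 / sqrt (ws0!j \<bullet> ws0!j)) * (ws0!i \<bullet> ws0!j)"
      using wsi[OF i] wsi[OF j] carr0[OF i] carr0[OF j]
      by (simp add: smult_scalar_prod_distrib scalar_prod_smult_distrib)
    also have "\<dots> = (if i = j then 1 else 0)"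
    proof (cases "i = j")
      case True
      have p: "ws0!i \<bullet> ws0!i > 0" using pos0[OF i] .
      then show ?thesis using True
        by (simp add: field_simps)
    next
      case False then show ?thesis using orth0[OF i j] by simp
    qed
    finally show ?thesis .
  qed
  have "ws ! 0 = v" using wsi[OF npos] hd0 v1 by simp
  then show ?thesis using len carr ip unfolding orthonormal_def by (intro exI[of _ ws]) auto
qed

lemma real_sym_has_eigenvalue:
  fixes A :: "real mat"
  assumes A: "A \<in> carrier_mat n n" and n: "n > 0"
    and sym: "\<And>i j. i < n \<Longrightarrow> j < n \<Longrightarrow> A $$ (i, j) = A $$ (j, i)"
  shows "\<exists>r. eigenvalue A r"
proof -
  define Ac where "Ac = map_mat complex_of_real A"
  have Ac: "Ac \<in> carrier_mat n n" using A Ac_def by auto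
  obtain as where cp: "char_poly Ac = (\<Prod>a\<leftarrow>as. [:- a, 1:])" and las: "length as = n"
    using char_poly_factorized[OF Ac] by blast
  obtain e rest where as: "as = e # rest" using las n by (cases as) auto
  have "poly (char_poly Ac) e = 0" unfolding cp as by simp
  then have "eigenvalue Ac e" using eigenvalue_root_char_poly[OF Ac] by simp
  then obtain v where ev: "eigenvector Ac v e" unfolding eigenvalue_def by blast
  have v: "v \<in> carrier_vec n" and v0: "v \<noteq> 0\<^sub>v n" and Av: "Ac *\<^sub>v v = e \<cdot>\<^sub>v v"
    using ev Ac unfolding eigenvector_def by auto
  have comp: "(\<Sum>j<n. complex_of_real (A $$ (i, j)) * v $ j) = e * v $ i" if i: "i < n" for i
  proof -
    have "(Ac *\<^sub>v v) $ i = e * v $ i" using Av i v by simp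
    moreover have "(Ac *\<^sub>v v) $ i = (\<Sum>j<n. complex_of_real (A $$ (i, j)) * v $ j)"
      using i A v Ac_def by (auto simp: scalar_prod_def row_def lessThan_atLeast0 intro!: sum.cong)
    ultimately show ?thesis by simp
  qed
  define s where "s = (\<Sum>i<n. \<Sum>j<n. complex_of_real (A $$ (i, j)) * cnj (v $ i) * v $ j)"
  define t where "t = (\<Sum>i<n. cnj (v $ i) * v $ i)"
  have st: "s = e * t"
  proof -
    have "s = (\<Sum>i<n. cnj (v $ i) * (\<Sum>j<n. complex_of_real (A $$ (i, j)) * v $ j))"
      unfolding s_def by (simp add: sum_distrib_left mult_ac)
    also have "\<dots> = (\<Sum>i<n. cnj (v $ i) * (e * v $ i))" using comp by simp
    also have "\<dots> = e * t" unfolding t_def by (simp add: sum_distrib_left mult_ac)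
    finally show ?thesis .
  qed
  have cs: "cnj s = s"
  proof -
    have "cnj s = (\<Sum>i<n. \<Sum>j<n. complex_of_real (A $$ (i, j)) * v $ i * cnj (v $ j))"
      unfolding s_def by (simp add: mult_ac)
    also have "\<dots> = (\<Sum>j<n. \<Sum>i<n. complex_of_real (A $$ (i, j)) * v $ i * cnj (v $ j))"
      by (rule sum.swap)
    also have "\<dots> = s" unfolding s_def
      by (intro sum.cong refl) (simp add: sym mult_ac)
    finally show ?thesis .
  qed
  have tre: "t = complex_of_real (\<Sum>i<n. (cmod (v $ i))^2)"
    unfolding t_def of_real_sum by (intro sum.cong refl) (metis complex_norm_square of_real_power mult.commute)
  obtain i0 where i0: "i0 < n" "v $ i0 \<noteq> 0" using v v0 by (metis eq_vecI carrier_vecD index_zero_vec(1,2))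
  have tpos: "(\<Sum>i<n. (cmod (v $ i))^2) > 0"
  proof -
    have "(\<Sum>i<n. (cmod (v $ i))^2) \<ge> (cmod (v $ i0))^2"
      using i0 by (intro member_le_sum) auto
    moreover have "(cmod (v $ i0))^2 > 0" using i0 by simp
    ultimately show ?thesis by linarith
  qed
  have "e * t = cnj e * t" using st cs tre by (metis complex_cnj_mult complex_cnj_complex_of_real)
  moreover have "t \<noteq> 0" using tpos tre by (metis of_real_eq_0_iff less_irrefl)
  ultimately have ee: "e = cnj e" by simp
  define r where "r = Re e"
  have "Im e = 0" using arg_cong[OF ee, of Im] by simp
  then have er: "e = complex_of_real r" unfolding r_def by (simp add: complex_eq_iff)
  define w1 where "w1 = vec n (\<lambda>i. Re (v $ i))"
  define w2 where "w2 = vec n (\<lambda>i. Im (v $ i))"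
  have compR: "(\<Sum>j<n. A $$ (i, j) * Re (v $ j)) = r * Re (v $ i)"
    and compI: "(\<Sum>j<n. A $$ (i, j) * Im (v $ j)) = r * Im (v $ i)" if i: "i < n" for i
  proof -
    have "Re (\<Sum>j<n. complex_of_real (A $$ (i, j)) * v $ j) = Re (e * v $ i)" using comp[OF i] by simp
    then show "(\<Sum>j<n. A $$ (i, j) * Re (v $ j)) = r * Re (v $ i)" by (simp add: er Re_sum)
    have "Im (\<Sum>j<n. complex_of_real (A $$ (i, j)) * v $ j) = Im (e * v $ i)" using comp[OF i] by simp
    then show "(\<Sum>j<n. A $$ (i, j) * Im (v $ j)) = r * Im (v $ i)" by (simp add: er Im_sum)
  qed
  have Aw1: "A *\<^sub>v w1 = r \<cdot>\<^sub>v w1" 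
    using A compR by (intro eq_vecI) (auto simp: w1_def scalar_prod_def row_def lessThan_atLeast0)
  have Aw2: "A *\<^sub>v w2 = r \<cdot>\<^sub>v w2"
    using A compI by (intro eq_vecI) (auto simp: w2_def scalar_prod_def row_def lessThan_atLeast0)
  have "w1 \<noteq> 0\<^sub>v n \<or> w2 \<noteq> 0\<^sub>v n"
  proof (rule ccontr)
    assume "\<not> ?thesis"
    then have "w1 $ i0 = 0" "w2 $ i0 = 0" using i0 by auto
    then have "v $ i0 = 0" using i0 by (simp add: w1_def w2_def complex_eq_iff)
    then show False using i0 by simp
  qed
  then have "eigenvector A w1 r \<or> eigenvector A w2 r"
    using Aw1 Aw2 A unfolding eigenvector_def by (auto simp: w1_def w2_def)
  then show ?thesis unfolding eigenvalue_def by blast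
qed

lemma sym_form:
  fixes A :: "real mat"
  assumes A: "A \<in> carrier_mat n n" and sym: "\<And>i j. i < n \<Longrightarrow> j < n \<Longrightarrow> A $$ (i, j) = A $$ (j, i)"
    and x: "x \<in> carrier_vec n" and y: "y \<in> carrier_vec n"
  shows "x \<bullet> (A *\<^sub>v y) = y \<bullet> (A *\<^sub>v x)"
proof -
  have "x \<bullet> (A *\<^sub>v y) = (\<Sum>i<n. x $ i * (\<Sum>j<n. A $$ (i, j) * y $ j))"
    using A x y by (auto simp: scalar_prod_def row_def lessThan_atLeast0 intro!: sum.cong)
  also have "\<dots> = (\<Sum>i<n. \<Sum>j<n. x $ i * A $$ (i, j) * y $ j)"
    by (simp add: sum_distrib_left mult_ac)
  also have "\<dots> = (\<Sum>j<n. \<Sum>i<n. x $ i * A $$ (i, j) * y $ j)" by (rule sum.swap)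
  also have "\<dots> = (\<Sum>j<n. y $ j * (\<Sum>i<n. A $$ (j, i) * x $ i))"
    by (simp add: sum_distrib_left mult_ac sym)
  also have "\<dots> = y \<bullet> (A *\<^sub>v x)"
    using A x y by (auto simp: scalar_prod_def row_def lessThan_atLeast0 intro!: sum.cong)
  finally show ?thesis .
qed

lemma orth_mat:
  assumes on: "orthonormal n ws" and len: "length ws = n"
  defines "W \<equiv> mat_of_cols n ws"
  shows "W \<in> carrier_mat n n" "transpose_mat W * W = 1\<^sub>m n" "W * transpose_mat W = 1\<^sub>m n"
proof -
  show W: "W \<in> carrier_mat n n" unfolding W_def using len by auto
  have c: "\<And>i. i < n \<Longrightarrow> col W i = ws ! i" unfolding W_def
    using on len by (intro col_mat_of_cols) (auto simp: orthonormal_def)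
  show 1: "transpose_mat W * W = 1\<^sub>m n"
    using W on len c by (intro eq_matI) (auto simp: orthonormal_def)
  show "W * transpose_mat W = 1\<^sub>m n" using mat_mult_left_right_inverse[OF _ W 1] W by auto
qed

lemma orth_preserve:
  fixes W :: "real mat"
  assumes W: "W \<in> carrier_mat n n" and WW: "transpose_mat W * W = 1\<^sub>m n"
    and x: "x \<in> carrier_vec n" and y: "y \<in> carrier_vec n"
  shows "(W *\<^sub>v x) \<bullet> (W *\<^sub>v y) = x \<bullet> y"
proof -
  have "(W *\<^sub>v x) \<bullet> (W *\<^sub>v y) = (transpose_mat W *\<^sub>v (W *\<^sub>v x)) \<bullet> y"
    using transpose_vec_mult_scalar[OF W y, of "W *\<^sub>v x"] W x by auto
  also have "transpose_mat W *\<^sub>v (W *\<^sub>v x) = x"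
    using W x WW by (metis assoc_mult_mat_vec carrier_matD(1) carrier_matI index_transpose_mat(2,3) one_mult_mat_vec)
  finally show ?thesis .
qed

lemma spectral_sorted:
  fixes A :: "real mat"
  assumes "A \<in> carrier_mat n n" "\<And>i j. i < n \<Longrightarrow> j < n \<Longrightarrow> A $$ (i, j) = A $$ (j, i)"
  shows "\<exists>us ds. length us = n \<and> length ds = n \<and> orthonormal n us \<and> sorted_wrt (\<ge>) ds \<and>
           (\<forall>i<n. A *\<^sub>v (us ! i) = ds ! i \<cdot>\<^sub>v us ! i)"
  using assms
proof (induction n arbitrary: A)
  case 0
  then show ?case by (intro exI[of _ "[]"]) (auto simp: orthonormal_def)
next
  case (Suc n')
  define n where "n = Suc n'"
  have A: "A \<in> carrier_mat n n" using Suc n_def by simp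
  have sym: "\<And>i j. i < n \<Longrightarrow> j < n \<Longrightarrow> A $$ (i, j) = A $$ (j, i)" using Suc n_def by simp
  define EV where "EV = {r. eigenvalue A r}"
  have "char_poly A \<noteq> 0" using degree_monic_char_poly[OF A] by auto
  moreover have "EV = {x. poly (char_poly A) x = 0}" using eigenvalue_root_char_poly[OF A] EV_def by auto
  ultimately have finEV: "finite EV" using poly_roots_finite by simp
  have "EV \<noteq> {}" using real_sym_has_eigenvalue[OF A _ sym] n_def unfolding EV_def by auto
  define e where "e = Max EV"
  have eEV: "e \<in> EV" using finEV \<open>EV \<noteq> {}\<close> e_def by simp
  have emax: "\<And>r. eigenvalue A r \<Longrightarrow> r \<le> e" using finEV e_def EV_def by simp
  obtain v where v: "v \<in> carrier_vec n" "v \<noteq> 0\<^sub>v n" "A *\<^sub>v v = e \<cdot>\<^sub>v v"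
    using eEV A unfolding EV_def eigenvalue_def eigenvector_def by auto
  have vpos: "v \<bullet> v > 0" using conjugate_square_greater_0_vec[OF v(1)] v(2) by simp
  define v1 where "v1 = (1 / sqrt (v \<bullet> v)) \<cdot>\<^sub>v v"
  have v1: "v1 \<in> carrier_vec n" using v v1_def by simp
  have v11: "v1 \<bullet> v1 = 1" using vpos v(1) unfolding v1_def
    by (simp add: smult_scalar_prod_distrib scalar_prod_smult_distrib field_simps)
  have Av1: "A *\<^sub>v v1 = e \<cdot>\<^sub>v v1" using v A unfolding v1_def
    by (simp add: mult_mat_vec smult_smult_assoc mult.commute)
  obtain ws where ws: "length ws = n" "orthonormal n ws" "ws ! 0 = v1"
    using orthonormal_extend[OF v1 v11] by blast
  define W where "W = mat_of_cols n ws"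
  note Wp = orth_mat[OF ws(2) ws(1), folded W_def]
  have wsc: "\<And>i. i < n \<Longrightarrow> ws ! i \<in> carrier_vec n" using ws by (auto simp: orthonormal_def)
  have wsip: "\<And>i j. i < n \<Longrightarrow> j < n \<Longrightarrow> ws!i \<bullet> ws!j = (if i = j then 1 else 0)"
    using ws by (auto simp: orthonormal_def)
  have colW: "\<And>i. i < n \<Longrightarrow> col W i = ws ! i" unfolding W_def
    using ws wsc by (intro col_mat_of_cols) auto
  define A' where "A' = transpose_mat W * A * W"
  have A'c: "A' \<in> carrier_mat n n" using A Wp unfolding A'_def by auto
  have A'e: "A' $$ (i, j) = ws ! i \<bullet> (A *\<^sub>v ws ! j)" if i: "i < n" and j: "j < n" for i j
  proof -
    have "A' = transpose_mat W * (A * W)" unfolding A'_def using A Wp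
      by (metis assoc_mult_mat carrier_matD(1) carrier_matI index_transpose_mat(2,3))
    then have "A' $$ (i, j) = row (transpose_mat W) i \<bullet> col (A * W) j"
      using i j A Wp by auto
    also have "\<dots> = ws ! i \<bullet> (A *\<^sub>v ws ! j)"
      using i j A Wp colW by (simp add: col_mult2[OF A Wp(1) j])
    finally show ?thesis .
  qed
  have AW: "A * W = W * A'"
  proof -
    have WT: "transpose_mat W \<in> carrier_mat n n" using Wp by auto
    have "W * A' = W * ((transpose_mat W * A) * W)" unfolding A'_def ..
    also have "\<dots> = (W * (transpose_mat W * A)) * W"
      using assoc_mult_mat[OF Wp(1) mult_carrier_mat[OF WT A] Wp(1)] by simp
    also have "W * (transpose_mat W * A) = (W * transpose_mat W) * A"
      using assoc_mult_mat[OF Wp(1) WT A] by simp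
    also have "\<dots> = A" using Wp(3) A by simp
    finally show ?thesis by simp
  qed
  have A'sym: "A' $$ (i, j) = A' $$ (j, i)" if "i < n" "j < n" for i j
    using that A'e sym_form[OF A sym] wsc by simp
  have A'0: "A' $$ (i, 0) = (if i = 0 then e else 0)" if i: "i < n" for i
  proof -
    have "A' $$ (i, 0) = ws ! i \<bullet> (e \<cdot>\<^sub>v v1)" using A'e[OF i] Av1 ws(3) n_def by simp
    also have "\<dots> = e * (ws ! i \<bullet> ws ! 0)" using wsc[OF i] v1 ws(3) by simp
    finally show ?thesis using wsip[OF i] n_def by simp
  qed
  define A3 where "A3 = mat n' n' (\<lambda>(i, j). A' $$ (Suc i, Suc j))"
  have A3c: "A3 \<in> carrier_mat n' n'" unfolding A3_def by simp
  have A3sym: "\<And>i j. i < n' \<Longrightarrow> j < n' \<Longrightarrow> A3 $$ (i, j) = A3 $$ (j, i)"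
    unfolding A3_def using A'sym n_def by simp
  obtain us3 ds3 where IH: "length us3 = n'" "length ds3 = n'" "orthonormal n' us3" "sorted_wrt (\<ge>) ds3"
     "\<forall>i<n'. A3 *\<^sub>v (us3 ! i) = ds3 ! i \<cdot>\<^sub>v us3 ! i"
    using Suc.IH[OF A3c A3sym] by blast
  have us3c: "\<And>i. i < n' \<Longrightarrow> us3 ! i \<in> carrier_vec n'" using IH by (auto simp: orthonormal_def)
  have mv: "(M *\<^sub>v z) $ i = (\<Sum>j<dim_vec z. M $$ (i, j) * z $ j)" if "i < dim_row M" "dim_col M = dim_vec z" for M :: "real mat" and z i
    using that by (auto simp: scalar_prod_def row_def lessThan_atLeast0 intro!: sum.cong)
  have A'u: "A' *\<^sub>v unit_vec n 0 = e \<cdot>\<^sub>v unit_vec n 0"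
  proof (rule eq_vecI)
    show "dim_vec (A' *\<^sub>v unit_vec n 0) = dim_vec (e \<cdot>\<^sub>v unit_vec n 0)" using A'c by simp
    fix i assume "i < dim_vec (e \<cdot>\<^sub>v unit_vec n 0)"
    then have i: "i < n" by simp
    have "(A' *\<^sub>v unit_vec n 0) $ i = (\<Sum>j<n. A' $$ (i, j) * unit_vec n 0 $ j)"
      using mv[of i A' "unit_vec n 0"] A'c i by simp
    also have "\<dots> = A' $$ (i, 0)" using n_def
      by (simp add: unit_vec_def if_distrib cong: if_cong)
    finally show "(A' *\<^sub>v unit_vec n 0) $ i = (e \<cdot>\<^sub>v unit_vec n 0) $ i"
      using A'0[OF i] i n_def by (simp add: unit_vec_def)
  qed
  have A'lift: "A' *\<^sub>v vCons 0 y = vCons 0 (A3 *\<^sub>v y)" if y: "y \<in> carrier_vec n'" for y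
  proof (rule eq_vecI)
    show "dim_vec (A' *\<^sub>v vCons 0 y) = dim_vec (vCons 0 (A3 *\<^sub>v y))" using A'c A3c n_def by simp
    fix i assume "i < dim_vec (vCons 0 (A3 *\<^sub>v y))"
    then have i: "i < n" using A3c n_def by simp
    have "(A' *\<^sub>v vCons 0 y) $ i = (\<Sum>j<Suc n'. A' $$ (i, j) * vCons 0 y $ j)"
      using mv[of i A' "vCons 0 y"] A'c i y n_def by simp
    also have "\<dots> = (\<Sum>j<n'. A' $$ (i, Suc j) * y $ j)"
      by (subst sum.lessThan_Suc_shift) simp
    finally have eq: "(A' *\<^sub>v vCons 0 y) $ i = (\<Sum>j<n'. A' $$ (i, Suc j) * y $ j)" .
    show "(A' *\<^sub>v vCons 0 y) $ i = vCons 0 (A3 *\<^sub>v y) $ i"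
    proof (cases i)
      case 0
      have "A' $$ (0, Suc j) = 0" if "j < n'" for j
        using A'sym[of 0 "Suc j"] A'0[of "Suc j"] that n_def by simp
      then show ?thesis using eq 0 by simp
    next
      case (Suc i')
      then have i': "i' < n'" using i n_def by simp
      have "(A3 *\<^sub>v y) $ i' = (\<Sum>j<n'. A3 $$ (i', j) * y $ j)"
        using mv[of i' A3 y] A3c y i' by simp
      also have "\<dots> = (\<Sum>j<n'. A' $$ (i, Suc j) * y $ j)"
        using i' Suc by (intro sum.cong refl) (simp add: A3_def)
      finally show ?thesis using eq Suc by simp
    qed
  qed
  define zs where "zs = unit_vec n 0 # map (vCons 0) us3"
  define ds where "ds = e # ds3"
  define us where "us = map (\<lambda>z. W *\<^sub>v z) zs"
  have lzs: "length zs = n" using IH n_def zs_def by simp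
  have zsc: "zs ! i \<in> carrier_vec n" if "i < n" for i
    using that us3c n_def IH(1) unfolding zs_def by (cases i) auto
  have zsip: "zs ! i \<bullet> zs ! j = (if i = j then 1 else 0)" if i: "i < n" and j: "j < n" for i j
  proof -
    have o3: "\<And>i j. i < n' \<Longrightarrow> j < n' \<Longrightarrow> us3!i \<bullet> us3!j = (if i = j then 1 else 0)"
      using IH by (auto simp: orthonormal_def)
    have u0: "unit_vec n 0 = vCons 1 (0\<^sub>v n')" using n_def by (auto intro!: eq_vecI simp: unit_vec_def vCons_def split: nat.split)
    show ?thesis using i j IH(1) o3 n_def us3c unfolding zs_def u0
      by (cases i; cases j) (auto simp: scalar_prod_vCons)
  qed
  have zsev: "A' *\<^sub>v (zs ! i) = ds ! i \<cdot>\<^sub>v zs ! i" if i: "i < n" for i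
  proof (cases i)
    case 0 then show ?thesis using A'u by (simp add: zs_def ds_def)
  next
    case (Suc i')
    then have i': "i' < n'" using i n_def by simp
    have "A' *\<^sub>v (zs ! i) = vCons 0 (A3 *\<^sub>v (us3 ! i'))" using A'lift[OF us3c[OF i']] Suc i' IH(1)
      by (simp add: zs_def)
    also have "\<dots> = vCons 0 (ds3 ! i' \<cdot>\<^sub>v us3 ! i')" using IH(5) i' by simp
    also have "\<dots> = ds ! i \<cdot>\<^sub>v zs ! i" using Suc i' IH(1)
      by (auto simp: zs_def ds_def intro!: eq_vecI simp: vCons_def split: nat.split)
    finally show ?thesis .
  qed
  have usi: "us ! i = W *\<^sub>v zs ! i" if "i < n" for i using that lzs us_def by simp
  have usc: "us ! i \<in> carrier_vec n" if "i < n" for i using usi[OF that] Wp(1) zsc[OF that] by simp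
  have usip: "us ! i \<bullet> us ! j = (if i = j then 1 else 0)" if i: "i < n" and j: "j < n" for i j
    using usi[OF i] usi[OF j] orth_preserve[OF Wp(1) Wp(2) zsc[OF i] zsc[OF j]] zsip[OF i j] by simp
  have usev: "A *\<^sub>v (us ! i) = ds ! i \<cdot>\<^sub>v us ! i" if i: "i < n" for i
  proof -
    have "A *\<^sub>v (us ! i) = (A * W) *\<^sub>v zs ! i" using usi[OF i] A Wp(1) zsc[OF i]
      by (simp add: assoc_mult_mat_vec)
    also have "\<dots> = W *\<^sub>v (A' *\<^sub>v zs ! i)" unfolding AW using A'c Wp(1) zsc[OF i]
      by (simp add: assoc_mult_mat_vec)
    also have "\<dots> = ds ! i \<cdot>\<^sub>v us ! i" using zsev[OF i] usi[OF i] Wp(1) zsc[OF i]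
      by (simp add: mult_mat_vec)
    finally show ?thesis .
  qed
  have lus: "length us = n" using lzs us_def by simp
  have lds: "length ds = n" using IH n_def ds_def by simp
  have on: "orthonormal n us" unfolding orthonormal_def
  proof (intro conjI allI impI subsetI)
    fix x assume "x \<in> set us"
    then obtain i where "i < n" "x = us ! i" using lus by (auto simp: in_set_conv_nth)
    then show "x \<in> carrier_vec n" using usc by simp
  qed (use lus usip in simp)
  have le: "d \<le> e" if "d \<in> set ds3" for d
  proof -
    obtain i' where i': "i' < n'" "d = ds3 ! i'" using \<open>d \<in> set ds3\<close> IH(2) by (auto simp: in_set_conv_nth)
    have i: "Suc i' < n" using i' n_def by simp
    have "us ! Suc i' \<noteq> 0\<^sub>v n" using usip[OF i i] by auto
    then have "eigenvector A (us ! Suc i') d" using usev[OF i] usc[OF i] A i'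
      unfolding eigenvector_def by (simp add: ds_def)
    then show ?thesis using emax unfolding eigenvalue_def by blast
  qed
  have srt: "sorted_wrt (\<ge>) ds" using IH(4) le unfolding ds_def by simp
  show ?case
    apply (rule exI[of _ us], rule exI[of _ ds])
    using lus lds on srt usev unfolding n_def by simp
qed

lemma sp_sum: "x \<in> carrier_vec n \<Longrightarrow> y \<in> carrier_vec n \<Longrightarrow> x \<bullet> y = (\<Sum>i<n. x $ i * y $ i)"
  by (auto simp: scalar_prod_def lessThan_atLeast0)

lemma mv_sum: "M \<in> carrier_mat m n \<Longrightarrow> x \<in> carrier_vec n \<Longrightarrow> i < m \<Longrightarrow>
   (M *\<^sub>v x) $ i = (\<Sum>j<n. M $$ (i, j) * x $ j)"
  by (auto simp: scalar_prod_def row_def lessThan_atLeast0 intro!: sum.cong)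

lemma eig_form:
  fixes B :: "real mat"
  assumes B: "B \<in> carrier_mat n n" and lus: "length us = n" and lds: "length ds = n"
    and on: "orthonormal n us" and ev: "\<forall>i<n. B *\<^sub>v (us ! i) = ds ! i \<cdot>\<^sub>v us ! i"
    and c: "c \<in> carrier_vec n"
  shows "(mat_of_cols n us *\<^sub>v c) \<bullet> (B *\<^sub>v (mat_of_cols n us *\<^sub>v c)) = (\<Sum>i<n. ds ! i * (c $ i)^2)"
proof -
  define U where "U = mat_of_cols n us"
  note Up = orth_mat[OF on lus, folded U_def]
  have usc: "\<And>i. i < n \<Longrightarrow> us ! i \<in> carrier_vec n" using on lus by (auto simp: orthonormal_def)
  have colU: "\<And>i. i < n \<Longrightarrow> col U i = us ! i" unfolding U_def
    using lus usc by (intro col_mat_of_cols) auto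
  define D where "D = mat n n (\<lambda>(i, j). if i = j then ds ! i else 0)"
  have BU: "B * U = U * D"
  proof (rule eq_matI)
    fix i j assume i: "i < dim_row (U * D)" and j: "j < dim_col (U * D)"
    then have i: "i < n" and j: "j < n" using Up by (auto simp: D_def)
    have "(B * U) $$ (i, j) = (B *\<^sub>v us ! j) $ i" using B Up i j colU
      by (simp add: col_mult2[symmetric])
    also have "\<dots> = ds ! j * (us ! j) $ i" using ev j i usc[OF j] by (simp add: carrier_vecD)
    finally have 1: "(B * U) $$ (i, j) = ds ! j * (us ! j) $ i" .
    have "(U * D) $$ (i, j) = (\<Sum>l<n. U $$ (i, l) * D $$ (l, j))"
      using i j Up by (auto simp: D_def scalar_prod_def lessThan_atLeast0 intro!: sum.cong)
    also have "\<dots> = U $$ (i, j) * ds ! j"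
      using j by (simp add: D_def if_distrib cong: if_cong)
    also have "U $$ (i, j) = (us ! j) $ i" using colU[OF j] i Up
      by (metis carrier_matD(1) col_def index_vec)
    finally show "(B * U) $$ (i, j) = (U * D) $$ (i, j)" using 1 by simp
  qed (use B Up D_def in auto)
  have Dc: "D *\<^sub>v c = vec n (\<lambda>i. ds ! i * c $ i)"
  proof (rule eq_vecI)
    fix i assume "i < dim_vec (vec n (\<lambda>i. ds ! i * c $ i))"
    then have i: "i < n" by simp
    have "(D *\<^sub>v c) $ i = (\<Sum>j<n. D $$ (i, j) * c $ j)" using mv_sum[of D n n c i] c i by (simp add: D_def)
    also have "\<dots> = (\<Sum>j<n. if i = j then ds ! j * c $ j else 0)" using i by (intro sum.cong) (auto simp: D_def)
    also have "\<dots> = ds ! i * c $ i" using i by simp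
    finally show "(D *\<^sub>v c) $ i = vec n (\<lambda>i. ds ! i * c $ i) $ i" using i by simp
  qed (simp add: D_def)
  have Dcar: "D \<in> carrier_mat n n" by (simp add: D_def)
  have "B *\<^sub>v (U *\<^sub>v c) = (B * U) *\<^sub>v c" using assoc_mult_mat_vec[OF B Up(1) c] by simp
  also have "\<dots> = U *\<^sub>v (D *\<^sub>v c)" unfolding BU using assoc_mult_mat_vec[OF Up(1) Dcar c] .
  finally have BUc: "B *\<^sub>v (U *\<^sub>v c) = U *\<^sub>v (D *\<^sub>v c)" .
  have "(U *\<^sub>v c) \<bullet> (B *\<^sub>v (U *\<^sub>v c)) = c \<bullet> (D *\<^sub>v c)"
    unfolding BUc by (rule orth_preserve[OF Up(1) Up(2) c]) (use Dcar c in simp)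
  also have "\<dots> = (\<Sum>i<n. ds ! i * (c $ i)^2)" unfolding Dc using c
    by (simp add: sp_sum power2_eq_square mult_ac)
  finally show ?thesis unfolding U_def .
qed

lemma cf_compare:
  fixes B B' :: "real mat"
  assumes B: "B \<in> carrier_mat n n" and B': "B' \<in> carrier_mat n n"
    and lus: "length us = n" and lds: "length ds = n" and on: "orthonormal n us"
    and srt: "sorted_wrt (\<ge>) ds" and ev: "\<forall>i<n. B *\<^sub>v (us ! i) = ds ! i \<cdot>\<^sub>v us ! i"
    and lus': "length us' = n" and lds': "length ds' = n" and on': "orthonormal n us'"
    and srt': "sorted_wrt (\<ge>) ds'" and ev': "\<forall>i<n. B' *\<^sub>v (us' ! i) = ds' ! i \<cdot>\<^sub>v us' ! i"
    and form: "\<And>x. x \<in> carrier_vec n \<Longrightarrow> x \<bullet> (B *\<^sub>v x) \<le> \<alpha> * (x \<bullet> (B' *\<^sub>v x)) + \<beta> * (x \<bullet> x)"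
    and alpha: "\<alpha> \<ge> 0" and k: "k < n"
  shows "ds ! k \<le> \<alpha> * ds' ! k + \<beta>"
proof -
  define U where "U = mat_of_cols n us"
  define U' where "U' = mat_of_cols n us'"
  note Up = orth_mat[OF on lus, folded U_def]
  note Up' = orth_mat[OF on' lus', folded U'_def]
  have U'T: "transpose_mat U' \<in> carrier_mat n n" using Up' by auto
  define G where "G = transpose_mat U' * U"
  have G: "G \<in> carrier_mat n n" using Up Up' G_def by auto
  define rw where "rw = (\<lambda>j. vec (Suc k) (\<lambda>i. G $$ (j, i)))"
  define H where "H = mat\<^sub>r (Suc k) (Suc k) (\<lambda>j. if j = k then 0\<^sub>v (Suc k) else rw j)"
  have "det H = 0" unfolding H_def by (rule det_row_0) (auto simp: rw_def)
  then obtain v where v: "v \<in> carrier_vec (Suc k)" "v \<noteq> 0\<^sub>v (Suc k)" "H *\<^sub>v v = 0\<^sub>v (Suc k)"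
    using det_0_iff_vec_prod_zero_field[of H "Suc k"] H_def by auto
  define c where "c = vec n (\<lambda>i. if i \<le> k then v $ i else 0)"
  have c: "c \<in> carrier_vec n" unfolding c_def by simp
  obtain i0 where i0: "i0 \<le> k" "v $ i0 \<noteq> 0" using v(1,2)
    by (metis eq_vecI carrier_vecD index_zero_vec(1,2) less_Suc_eq_le)
  have ci0: "c $ i0 \<noteq> 0" using i0 k unfolding c_def by simp
  have cc: "c \<bullet> c > 0"
  proof -
    have "c \<bullet> c = (\<Sum>i<n. (c $ i)^2)" using c by (simp add: sp_sum power2_eq_square)
    also have "\<dots> \<ge> (c $ i0)^2" using i0 k by (intro member_le_sum) auto
    finally show ?thesis using ci0 by (smt (verit) zero_less_power2)
  qed
  have Gc: "(G *\<^sub>v c) $ j = 0" if j: "j < k" for j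
  proof -
    have "(G *\<^sub>v c) $ j = (\<Sum>i<n. G $$ (j, i) * c $ i)" using mv_sum[OF G c] j k by simp
    also have "\<dots> = (\<Sum>i<Suc k. G $$ (j, i) * c $ i)"
      using k by (intro sum.mono_neutral_right) (auto simp: c_def)
    also have "\<dots> = (\<Sum>i<Suc k. H $$ (j, i) * v $ i)"
      using j k by (intro sum.cong refl) (simp add: c_def H_def rw_def)
    also have "\<dots> = (H *\<^sub>v v) $ j" by (rule mv_sum[of H "Suc k" "Suc k", symmetric]) (use v j in \<open>auto simp: H_def\<close>)
    also have "\<dots> = 0" using v(3) j by simp
    finally show ?thesis .
  qed
  define f where "f = U *\<^sub>v c"
  have f: "f \<in> carrier_vec n" using Up c f_def by simp
  define y where "y = transpose_mat U' *\<^sub>v f"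
  have y: "y \<in> carrier_vec n" using U'T f y_def by simp
  have yG: "y = G *\<^sub>v c" unfolding y_def f_def G_def using assoc_mult_mat_vec[OF U'T Up(1) c] by simp
  have fy: "f = U' *\<^sub>v y" unfolding y_def using assoc_mult_mat_vec[OF Up'(1) U'T f] Up'(3) f by simp
  have ff: "f \<bullet> f = c \<bullet> c" unfolding f_def by (rule orth_preserve[OF Up(1) Up(2) c c])
  have yy: "y \<bullet> y = c \<bullet> c" using orth_preserve[OF Up'(1) Up'(2) y y] fy ff by simp
  have fB: "f \<bullet> (B *\<^sub>v f) = (\<Sum>i<n. ds ! i * (c $ i)^2)"
    unfolding f_def U_def by (rule eig_form[OF B lus lds on ev c])
  have fB': "f \<bullet> (B' *\<^sub>v f) = (\<Sum>i<n. ds' ! i * (y $ i)^2)"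
    unfolding fy U'_def by (rule eig_form[OF B' lus' lds' on' ev' y])
  have low: "ds ! k * (c \<bullet> c) \<le> f \<bullet> (B *\<^sub>v f)"
  proof -
    have "ds ! k * (c \<bullet> c) = (\<Sum>i<n. ds ! k * (c $ i)^2)"
      using c by (simp add: sp_sum power2_eq_square sum_distrib_left)
    also have "\<dots> \<le> (\<Sum>i<n. ds ! i * (c $ i)^2)"
    proof (rule sum_mono)
      fix i assume i: "i \<in> {..<n}"
      show "ds ! k * (c $ i)^2 \<le> ds ! i * (c $ i)^2"
      proof (cases "i \<le> k")
        case True
        have "ds ! k \<le> ds ! i"
        proof (cases "i = k")
          case False
          then have "i < k" using True by simp
          then show ?thesis using sorted_wrt_nth_less[OF srt _ ] k lds by simp
        qed simp
        then show ?thesis by (simp add: mult_right_mono)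
      next
        case False then show ?thesis using i by (simp add: c_def)
      qed
    qed
    finally show ?thesis using fB by simp
  qed
  have up: "f \<bullet> (B' *\<^sub>v f) \<le> ds' ! k * (c \<bullet> c)"
  proof -
    have "(\<Sum>i<n. ds' ! i * (y $ i)^2) \<le> (\<Sum>i<n. ds' ! k * (y $ i)^2)"
    proof (rule sum_mono)
      fix i assume i: "i \<in> {..<n}"
      show "ds' ! i * (y $ i)^2 \<le> ds' ! k * (y $ i)^2"
      proof (cases "i < k")
        case True then show ?thesis using Gc yG by simp
      next
        case False
        have "ds' ! i \<le> ds' ! k"
        proof (cases "i = k")
          case False
          then have "k < i" using \<open>\<not> i < k\<close> by simp
          then show ?thesis using sorted_wrt_nth_less[OF srt' _ ] i lds' by simp
        qed simp
        then show ?thesis by (simp add: mult_right_mono)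
      qed
    qed
    also have "\<dots> = ds' ! k * (y \<bullet> y)"
      using y by (simp add: sp_sum power2_eq_square sum_distrib_left)
    finally show ?thesis using fB' yy by simp
  qed
  have "ds ! k * (c \<bullet> c) \<le> \<alpha> * (ds' ! k * (c \<bullet> c)) + \<beta> * (c \<bullet> c)"
  proof -
    have "ds ! k * (c \<bullet> c) \<le> \<alpha> * (f \<bullet> (B' *\<^sub>v f)) + \<beta> * (f \<bullet> f)"
      using low form[OF f] by linarith
    also have "\<dots> \<le> \<alpha> * (ds' ! k * (c \<bullet> c)) + \<beta> * (c \<bullet> c)"
      using up alpha ff by (simp add: mult_left_mono)
    finally show ?thesis .
  qed
  then have "ds ! k * (c \<bullet> c) \<le> (\<alpha> * ds' ! k + \<beta>) * (c \<bullet> c)" by (simp add: algebra_simps)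
  then show ?thesis using cc by simp
qed

lemma eig_bounds:
  fixes B :: "real mat"
  assumes B: "B \<in> carrier_mat n n" and lus: "length us = n"
    and on: "orthonormal n us" and ev: "\<forall>i<n. B *\<^sub>v (us ! i) = ds ! i \<cdot>\<^sub>v us ! i" and i: "i < n"
  shows "ds ! i = us ! i \<bullet> (B *\<^sub>v us ! i)" "us ! i \<bullet> us ! i = 1" "us ! i \<in> carrier_vec n"
proof -
  show u: "us ! i \<in> carrier_vec n" using on lus i by (auto simp: orthonormal_def)
  show 1: "us ! i \<bullet> us ! i = 1" using on lus i by (auto simp: orthonormal_def)
  show "ds ! i = us ! i \<bullet> (B *\<^sub>v us ! i)" using ev i u 1 by simp
qed

lemma proots_lin_prod: "proots (\<Prod>a\<leftarrow>as. [:- a, 1:]) = mset (as :: real list)"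
proof (induction as)
  case Nil then show ?case by simp
next
  case (Cons a as)
  have nz: "(\<Prod>a\<leftarrow>as. [:- a, 1:]) \<noteq> (0 :: real poly)"
    by (auto simp: prod_list_zero_iff)
  have e: "(\<Prod>a\<leftarrow>a # as. [:- a, 1:]) = [:- a, 1:] * (\<Prod>a\<leftarrow>as. [:- a, 1:])" by simp
  have "proots ([:- a, 1:] * (\<Prod>a\<leftarrow>as. [:- a, 1:])) = proots [:- a, 1:] + proots (\<Prod>a\<leftarrow>as. [:- a, 1:])"
    by (rule proots_mult) (use nz in auto)
  then show ?case unfolding e using Cons proots_linear_factor[of "- a"] by simp
qed

lemma sorted_desc_unique:
  fixes as bs :: "real list"
  assumes "sorted_wrt (\<ge>) as" "sorted_wrt (\<ge>) bs"
    and "(\<Prod>a\<leftarrow>as. [:- a, 1:]) = (\<Prod>a\<leftarrow>bs. [:- a, 1:])"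
  shows "as = bs"
proof -
  have m: "mset as = mset bs" using arg_cong[OF assms(3), of proots] by (simp add: proots_lin_prod)
  have sa: "sorted (rev as)" using assms(1) by (simp add: sorted_wrt_rev)
  have sb: "sorted (rev bs)" using assms(2) by (simp add: sorted_wrt_rev)
  have "sort (rev bs) = rev as" using m sa by (intro properties_for_sort) simp_all
  moreover have "sort (rev bs) = rev bs" using sb by (simp add: sorted_sort_id)
  ultimately show ?thesis by simp
qed

lemma eig_mat:
  fixes B :: "real mat"
  assumes B: "B \<in> carrier_mat n n" and lus: "length us = n" and lds: "length ds = n"
    and on: "orthonormal n us" and ev: "\<forall>i<n. B *\<^sub>v (us ! i) = ds ! i \<cdot>\<^sub>v us ! i"
  shows "B * mat_of_cols n us = mat_of_cols n us * mat n n (\<lambda>(i, j). if i = j then ds ! i else 0)"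
proof -
  define U where "U = mat_of_cols n us"
  note Up = orth_mat[OF on lus, folded U_def]
  have usc: "\<And>i. i < n \<Longrightarrow> us ! i \<in> carrier_vec n" using on lus by (auto simp: orthonormal_def)
  have colU: "\<And>i. i < n \<Longrightarrow> col U i = us ! i" unfolding U_def
    using lus usc by (intro col_mat_of_cols) auto
  define D where "D = mat n n (\<lambda>(i, j). if i = j then ds ! i else 0)"
  have BU: "B * U = U * D"
  proof (rule eq_matI)
    fix i j assume i: "i < dim_row (U * D)" and j: "j < dim_col (U * D)"
    then have i: "i < n" and j: "j < n" using Up by (auto simp: D_def)
    have "(B * U) $$ (i, j) = (B *\<^sub>v us ! j) $ i" using B Up i j colU
      by (simp add: col_mult2[symmetric])
    also have "\<dots> = ds ! j * (us ! j) $ i" using ev j i usc[OF j] by (simp add: carrier_vecD)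
    finally have 1: "(B * U) $$ (i, j) = ds ! j * (us ! j) $ i" .
    have "(U * D) $$ (i, j) = (\<Sum>l<n. U $$ (i, l) * D $$ (l, j))"
      using i j Up by (auto simp: D_def scalar_prod_def lessThan_atLeast0 intro!: sum.cong)
    also have "\<dots> = U $$ (i, j) * ds ! j"
      using j by (simp add: D_def if_distrib cong: if_cong)
    also have "U $$ (i, j) = (us ! j) $ i" using colU[OF j] i Up
      by (metis carrier_matD(1) col_def index_vec)
    finally show "(B * U) $$ (i, j) = (U * D) $$ (i, j)" using 1 by simp
  qed (use B Up D_def in auto)
  then show ?thesis unfolding U_def D_def .
qed

lemma char_poly_spec:
  fixes B :: "real mat"
  assumes B: "B \<in> carrier_mat n n" and lus: "length us = n" and lds: "length ds = n"
    and on: "orthonormal n us" and ev: "\<forall>i<n. B *\<^sub>v (us ! i) = ds ! i \<cdot>\<^sub>v us ! i"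
  shows "char_poly B = (\<Prod>a\<leftarrow>ds. [:- a, 1:])"
proof -
  define U where "U = mat_of_cols n us"
  note Up = orth_mat[OF on lus, folded U_def]
  define D where "D = mat n n (\<lambda>(i, j). if i = j then ds ! i else 0)"
  have D: "D \<in> carrier_mat n n" by (simp add: D_def)
  have UT: "transpose_mat U \<in> carrier_mat n n" using Up by auto
  have BU: "B * U = U * D" using eig_mat[OF assms] unfolding U_def D_def .
  have "B = B * (U * transpose_mat U)" using Up B by simp
  also have "\<dots> = (B * U) * transpose_mat U" using assoc_mult_mat[OF B Up(1) UT] by simp
  also have "\<dots> = U * D * transpose_mat U" unfolding BU ..
  finally have eq: "B = U * D * transpose_mat U" .
  have "similar_mat_wit B D U (transpose_mat U)"
    unfolding similar_mat_wit_def Let_def using eq Up D UT B by auto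
  then have "similar_mat B D" unfolding similar_mat_def by blast
  then have "char_poly B = char_poly D" by (rule char_poly_similar)
  also have "\<dots> = (\<Prod>a\<leftarrow>diag_mat D. [:- a, 1:])"
    by (rule char_poly_upper_triangular[OF D]) (auto simp: D_def)
  also have "diag_mat D = ds" using lds by (auto simp: diag_mat_def D_def intro!: nth_equalityI)
  finally show ?thesis .
qed

definition fform :: "'a set \<Rightarrow> ('a \<Rightarrow> real) \<Rightarrow> ('a \<Rightarrow> 'a \<Rightarrow> real) \<Rightarrow> ('a \<Rightarrow> real) \<Rightarrow> real" where
  "fform S w Q f = (\<Sum>a\<in>S. w a * f a * (\<Sum>b\<in>S. Q a b * f b))"

definition fnorm :: "'a set \<Rightarrow> ('a \<Rightarrow> real) \<Rightarrow> ('a \<Rightarrow> real) \<Rightarrow> real" where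
  "fnorm S w f = (\<Sum>a\<in>S. w a * (f a)^2)"

definition symB :: "'a set \<Rightarrow> ('a \<Rightarrow> real) \<Rightarrow> ('a \<Rightarrow> 'a \<Rightarrow> real) \<Rightarrow> real mat" where
  "symB S w Q = (let xs = enum_list S in mat (length xs) (length xs)
     (\<lambda>(i, j). sqrt (w (xs ! i)) * Q (xs ! i) (xs ! j) / sqrt (w (xs ! j))))"

definition tof :: "'a set \<Rightarrow> ('a \<Rightarrow> real) \<Rightarrow> real vec \<Rightarrow> 'a \<Rightarrow> real" where
  "tof S w x = (\<lambda>a. x $ (inv_into {..<length (enum_list S)} (\<lambda>j. enum_list S ! j) a) / sqrt (w a))"

lemma enum_list: "finite S \<Longrightarrow> distinct (enum_list S) \<and> set (enum_list S) = S"
  unfolding enum_list_def by (rule someI_ex) (use finite_distinct_list in blast)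

lemma len_enum: "finite S \<Longrightarrow> length (enum_list S) = card S"
  using enum_list distinct_card by metis

lemma sum_enum:
  assumes "finite S"
  shows "(\<Sum>a\<in>S. g a) = (\<Sum>i<card S. g (enum_list S ! i))"
proof -
  have b: "bij_betw (\<lambda>i. enum_list S ! i) {..<card S} S"
    using enum_list[OF assms] len_enum[OF assms] by (intro bij_betw_nth) auto
  show ?thesis using sum.reindex_bij_betw[OF b, of g] by simp
qed

lemma diag_left: "i < n \<Longrightarrow> j < n \<Longrightarrow> M \<in> carrier_mat n n \<Longrightarrow>
  (mat n n (\<lambda>(i, j). if i = j then a i else 0) * M) $$ (i, j) = a i * M $$ (i, j)"
proof -
  assume i: "i < n" and j: "j < n" and M: "M \<in> carrier_mat n n"
  have "(mat n n (\<lambda>(i, j). if i = j then a i else 0) * M) $$ (i, j) =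
     (\<Sum>l<n. (if i = l then a i else 0) * M $$ (l, j))"
    using i j M by (auto simp: scalar_prod_def lessThan_atLeast0 intro!: sum.cong)
  also have "\<dots> = (\<Sum>l<n. if i = l then a i * M $$ (l, j) else 0)" by (intro sum.cong) auto
  also have "\<dots> = a i * M $$ (i, j)" using i by simp
  finally show ?thesis .
qed

lemma diag_right: "i < n \<Longrightarrow> j < n \<Longrightarrow> M \<in> carrier_mat n n \<Longrightarrow>
  (M * mat n n (\<lambda>(i, j). if i = j then a i else 0)) $$ (i, j) = M $$ (i, j) * a j"
proof -
  assume i: "i < n" and j: "j < n" and M: "M \<in> carrier_mat n n"
  have "(M * mat n n (\<lambda>(i, j). if i = j then a i else 0)) $$ (i, j) =
     (\<Sum>l<n. M $$ (i, l) * (if l = j then a l else 0))"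
    using i j M by (auto simp: scalar_prod_def lessThan_atLeast0 intro!: sum.cong)
  also have "\<dots> = (\<Sum>l<n. if j = l then M $$ (i, l) * a l else 0)" by (intro sum.cong) auto
  also have "\<dots> = M $$ (i, j) * a j" using j by simp
  finally show ?thesis .
qed

context
  fixes S :: "'a set" and w :: "'a \<Rightarrow> real" and Q :: "'a \<Rightarrow> 'a \<Rightarrow> real"
  assumes fin: "finite S" and pos: "\<forall>a\<in>S. w a > 0"
begin

lemma symB_carrier: "symB S w Q \<in> carrier_mat (card S) (card S)"
  unfolding symB_def Let_def using len_enum[OF fin] by simp

lemma symB_idx: "i < card S \<Longrightarrow> j < card S \<Longrightarrow> symB S w Q $$ (i, j) =
  sqrt (w (enum_list S ! i)) * Q (enum_list S ! i) (enum_list S ! j) / sqrt (w (enum_list S ! j))"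
  unfolding symB_def Let_def using len_enum[OF fin] by simp

lemma enum_in: "i < card S \<Longrightarrow> enum_list S ! i \<in> S"
  using enum_list[OF fin] len_enum[OF fin] by (metis nth_mem)

lemma symB_sym:
  assumes rev: "reversible S w Q" and i: "i < card S" and j: "j < card S"
  shows "symB S w Q $$ (i, j) = symB S w Q $$ (j, i)"
proof -
  define a where "a = enum_list S ! i"
  define b where "b = enum_list S ! j"
  have a: "a \<in> S" and b: "b \<in> S" using enum_in i j a_def b_def by auto
  have wa: "w a > 0" and wb: "w b > 0" using pos a b by auto
  have r: "w a * Q a b = w b * Q b a" using rev a b unfolding reversible_def by auto
  have "sqrt (w a) * Q a b / sqrt (w b) = w a * Q a b / (sqrt (w a) * sqrt (w b))"
    using wa wb by (simp add: field_simps)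
  also have "\<dots> = w b * Q b a / (sqrt (w b) * sqrt (w a))" using r by (simp add: mult.commute)
  also have "\<dots> = sqrt (w b) * Q b a / sqrt (w a)"
    using wa wb by (simp add: field_simps)
  finally show ?thesis using symB_idx i j a_def b_def by simp
qed

lemma char_poly_symB: "char_poly (to_mat S Q) = char_poly (symB S w Q)"
proof -
  define n where "n = card S"
  define xs where "xs = enum_list S"
  have lxs: "length xs = n" using len_enum[OF fin] xs_def n_def by simp
  define Ds where "Ds = mat n n (\<lambda>(i, j). if i = j then sqrt (w (xs ! i)) else 0)"
  define Di where "Di = mat n n (\<lambda>(i, j). if i = j then 1 / sqrt (w (xs ! i)) else 0)"
  have T: "to_mat S Q = mat n n (\<lambda>(i, j). Q (xs ! i) (xs ! j))"
    unfolding to_mat_def Let_def xs_def[symmetric] lxs ..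
  have B: "symB S w Q \<in> carrier_mat n n" using symB_carrier n_def by simp
  have wpos: "\<And>i. i < n \<Longrightarrow> w (xs ! i) > 0" using pos enum_in n_def xs_def by auto
  have DiDs: "Di * Ds = 1\<^sub>m n"
  proof (rule eq_matI)
    fix i j assume "i < dim_row (1\<^sub>m n)" "j < dim_col (1\<^sub>m n)"
    then have i: "i < n" and j: "j < n" by auto
    have "(Di * Ds) $$ (i, j) = 1 / sqrt (w (xs ! i)) * Ds $$ (i, j)"
      unfolding Di_def by (rule diag_left[OF i j]) (simp add: Ds_def)
    then show "(Di * Ds) $$ (i, j) = 1\<^sub>m n $$ (i, j)" using i j wpos[OF i] by (auto simp: Ds_def)
  qed (auto simp: Di_def Ds_def)
  have DsDi: "Ds * Di = 1\<^sub>m n"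
  proof (rule eq_matI)
    fix i j assume "i < dim_row (1\<^sub>m n)" "j < dim_col (1\<^sub>m n)"
    then have i: "i < n" and j: "j < n" by auto
    have "(Ds * Di) $$ (i, j) = sqrt (w (xs ! i)) * Di $$ (i, j)"
      unfolding Ds_def by (rule diag_left[OF i j]) (simp add: Di_def)
    then show "(Ds * Di) $$ (i, j) = 1\<^sub>m n $$ (i, j)" using i j wpos[OF i] by (auto simp: Di_def)
  qed (auto simp: Di_def Ds_def)
  have eq: "to_mat S Q = Di * symB S w Q * Ds"
  proof (rule eq_matI)
    fix i j assume "i < dim_row (Di * symB S w Q * Ds)" "j < dim_col (Di * symB S w Q * Ds)"
    then have i: "i < n" and j: "j < n" by (auto simp: Ds_def Di_def)
    have DB: "Di * symB S w Q \<in> carrier_mat n n" by (rule mult_carrier_mat[OF _ B]) (simp add: Di_def)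
    have "(Di * symB S w Q * Ds) $$ (i, j) = (Di * symB S w Q) $$ (i, j) * sqrt (w (xs ! j))"
      unfolding Ds_def by (rule diag_right[OF i j DB])
    also have "(Di * symB S w Q) $$ (i, j) = 1 / sqrt (w (xs ! i)) * symB S w Q $$ (i, j)"
      unfolding Di_def by (rule diag_left[OF i j B])
    finally show "to_mat S Q $$ (i, j) = (Di * symB S w Q * Ds) $$ (i, j)"
      using i j wpos[OF i] wpos[OF j] symB_idx[of i j] T n_def xs_def by simp
  qed (auto simp: T Ds_def Di_def)
  have "similar_mat_wit (to_mat S Q) (symB S w Q) Di Ds"
    unfolding similar_mat_wit_def Let_def using eq DiDs DsDi B T by (auto simp: Di_def Ds_def)
  then have "similar_mat (to_mat S Q) (symB S w Q)" unfolding similar_mat_def by blast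
  then show ?thesis by (rule char_poly_similar)
qed

lemma tof_enum: "i < card S \<Longrightarrow> tof S w x (enum_list S ! i) = x $ i / sqrt (w (enum_list S ! i))"
proof -
  assume i: "i < card S"
  have inj: "inj_on (\<lambda>j. enum_list S ! j) {..<length (enum_list S)}"
    using enum_list[OF fin] by (intro inj_on_nth) auto
  have "inv_into {..<length (enum_list S)} (\<lambda>j. enum_list S ! j) (enum_list S ! i) = i"
    using inv_into_f_f[OF inj, of i] i len_enum[OF fin] by simp
  then show ?thesis unfolding tof_def by simp
qed

lemma form_symB:
  assumes x: "x \<in> carrier_vec (card S)"
  shows "x \<bullet> (symB S w Q *\<^sub>v x) = fform S w Q (tof S w x)"
    and "x \<bullet> x = fnorm S w (tof S w x)"
proof -
  define n where "n = card S"
  define xs where "xs = enum_list S"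
  define f where "f = tof S w x"
  have wpos: "\<And>i. i < n \<Longrightarrow> w (xs ! i) > 0" using pos enum_in n_def xs_def by auto
  have fi: "\<And>i. i < n \<Longrightarrow> f (xs ! i) = x $ i / sqrt (w (xs ! i))"
    using tof_enum n_def xs_def f_def by simp
  have "fform S w Q f = (\<Sum>i<n. w (xs ! i) * f (xs ! i) * (\<Sum>j<n. Q (xs ! i) (xs ! j) * f (xs ! j)))"
    unfolding fform_def n_def xs_def by (simp add: sum_enum[OF fin])
  also have "\<dots> = (\<Sum>i<n. x $ i * (\<Sum>j<n. symB S w Q $$ (i, j) * x $ j))"
  proof (intro sum.cong refl)
    fix i assume i: "i \<in> {..<n}"
    have wi: "w (xs ! i) > 0" using wpos i by simp
    have "w (xs ! i) * f (xs ! i) = x $ i * sqrt (w (xs ! i))"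
      using fi i wi by (simp add: field_simps)
    moreover have "(\<Sum>j<n. Q (xs ! i) (xs ! j) * f (xs ! j)) * sqrt (w (xs ! i)) =
        (\<Sum>j<n. symB S w Q $$ (i, j) * x $ j)"
      unfolding sum_distrib_right using i fi symB_idx n_def xs_def by (intro sum.cong refl) simp
    ultimately show "w (xs ! i) * f (xs ! i) * (\<Sum>j<n. Q (xs ! i) (xs ! j) * f (xs ! j)) =
        x $ i * (\<Sum>j<n. symB S w Q $$ (i, j) * x $ j)" by (simp add: mult_ac)
  qed
  also have "\<dots> = (\<Sum>i<n. x $ i * (symB S w Q *\<^sub>v x) $ i)"
  proof (intro sum.cong refl)
    fix i assume "i \<in> {..<n}"
    then show "x $ i * (\<Sum>j<n. symB S w Q $$ (i, j) * x $ j) = x $ i * (symB S w Q *\<^sub>v x) $ i"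
      using mv_sum[OF symB_carrier x, of i] n_def by simp
  qed
  also have "\<dots> = x \<bullet> (symB S w Q *\<^sub>v x)"
    using x symB_carrier n_def by (simp add: sp_sum)
  finally show "x \<bullet> (symB S w Q *\<^sub>v x) = fform S w Q (tof S w x)" unfolding f_def by simp
  have "fnorm S w f = (\<Sum>i<n. w (xs ! i) * (f (xs ! i))^2)"
    unfolding fnorm_def n_def xs_def by (simp add: sum_enum[OF fin])
  also have "\<dots> = (\<Sum>i<n. x $ i * x $ i)"
  proof (intro sum.cong refl)
    fix i assume "i \<in> {..<n}"
    then have wi: "w (xs ! i) > 0" and f: "f (xs ! i) = x $ i / sqrt (w (xs ! i))" using fi wpos by auto
    then show "w (xs ! i) * (f (xs ! i))^2 = x $ i * x $ i" by (simp add: power_divide power2_eq_square)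
  qed
  also have "\<dots> = x \<bullet> x" using x n_def by (simp add: sp_sum)
  finally show "x \<bullet> x = fnorm S w (tof S w x)" unfolding f_def by simp
qed

end

context
  fixes S :: "'a set" and w :: "'a \<Rightarrow> real"
  assumes fin: "finite S" and pos: "\<forall>a\<in>S. w a > 0"
begin

lemma ev_spec:
  assumes rev: "reversible S w Q"
  shows "\<exists>us. length us = card S \<and> length (eigenvalues_desc S Q) = card S \<and>
     orthonormal (card S) us \<and> sorted_wrt (\<ge>) (eigenvalues_desc S Q) \<and>
     (\<forall>i<card S. symB S w Q *\<^sub>v (us ! i) = eigenvalues_desc S Q ! i \<cdot>\<^sub>v us ! i)"
proof -
  have B: "symB S w Q \<in> carrier_mat (card S) (card S)" by (rule symB_carrier[OF fin pos])
  obtain us ds where sp: "length us = card S" "length ds = card S" "orthonormal (card S) us"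
     "sorted_wrt (\<ge>) ds" "\<forall>i<card S. symB S w Q *\<^sub>v (us ! i) = ds ! i \<cdot>\<^sub>v us ! i"
  proof -
    have sy: "\<And>i j. i < card S \<Longrightarrow> j < card S \<Longrightarrow> symB S w Q $$ (i, j) = symB S w Q $$ (j, i)"
      by (rule symB_sym[OF fin pos rev])
    from spectral_sorted[OF B sy] show ?thesis using that by blast
  qed
  have cp: "char_poly (to_mat S Q) = (\<Prod>a\<leftarrow>ds. [:- a, 1:])"
    using char_poly_symB[OF fin pos, where Q=Q] char_poly_spec[OF B sp(1,2,3,5)] by simp
  have "eigenvalues_desc S Q = ds" unfolding eigenvalues_desc_def
  proof (rule the_equality)
    show "sorted_wrt (\<ge>) ds \<and> char_poly (to_mat S Q) = (\<Prod>l\<leftarrow>ds. [:- l, 1:])" using sp(4) cp by simp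
    fix ls assume "sorted_wrt (\<ge>) ls \<and> char_poly (to_mat S Q) = (\<Prod>l\<leftarrow>ls. [:- l, 1:])"
    then show "ls = ds" using sorted_desc_unique[of ls ds] sp(4) cp by metis
  qed
  then show ?thesis using sp by (intro exI[of _ us]) simp
qed

lemma ev_compare:
  assumes rev: "reversible S w Q" and rev': "reversible S w Q'" and alpha: "\<alpha> \<ge> 0"
    and form: "\<And>f. fform S w Q f \<le> \<alpha> * fform S w Q' f + \<beta> * fnorm S w f"
    and k: "k < card S"
  shows "eigenvalues_desc S Q ! k \<le> \<alpha> * eigenvalues_desc S Q' ! k + \<beta>"
proof -
  obtain us where sp: "length us = card S" "length (eigenvalues_desc S Q) = card S"
     "orthonormal (card S) us" "sorted_wrt (\<ge>) (eigenvalues_desc S Q)"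
     "\<forall>i<card S. symB S w Q *\<^sub>v (us ! i) = eigenvalues_desc S Q ! i \<cdot>\<^sub>v us ! i"
    using ev_spec[OF rev] by blast
  obtain us' where sp': "length us' = card S" "length (eigenvalues_desc S Q') = card S"
     "orthonormal (card S) us'" "sorted_wrt (\<ge>) (eigenvalues_desc S Q')"
     "\<forall>i<card S. symB S w Q' *\<^sub>v (us' ! i) = eigenvalues_desc S Q' ! i \<cdot>\<^sub>v us' ! i"
    using ev_spec[OF rev'] by blast
  show ?thesis
  proof (rule cf_compare[OF symB_carrier[OF fin pos] symB_carrier[OF fin pos] sp sp' _ alpha k])
    fix x :: "real vec" assume x: "x \<in> carrier_vec (card S)"
    show "x \<bullet> (symB S w Q *\<^sub>v x) \<le> \<alpha> * (x \<bullet> (symB S w Q' *\<^sub>v x)) + \<beta> * (x \<bullet> x)"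
      using form[of "tof S w x"] form_symB(1)[OF fin pos x, where Q=Q] form_symB(1)[OF fin pos x, where Q=Q'] form_symB(2)[OF fin pos x] by simp
  qed
qed

lemma ev_len:
  assumes rev: "reversible S w Q"
  shows "length (eigenvalues_desc S Q) = card S" "sorted_wrt (\<ge>) (eigenvalues_desc S Q)"
  using ev_spec[OF rev] by auto

lemma ev_lower:
  assumes rev: "reversible S w Q" and form: "\<And>f. 0 \<le> fform S w Q f" and k: "k < card S"
  shows "0 \<le> eigenvalues_desc S Q ! k"
proof -
  obtain us where sp: "length us = card S" "length (eigenvalues_desc S Q) = card S"
     "orthonormal (card S) us" "sorted_wrt (\<ge>) (eigenvalues_desc S Q)"
     "\<forall>i<card S. symB S w Q *\<^sub>v (us ! i) = eigenvalues_desc S Q ! i \<cdot>\<^sub>v us ! i"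
    using ev_spec[OF rev] by blast
  note eb = eig_bounds[OF symB_carrier[OF fin pos] sp(1) sp(3) sp(5) k]
  show ?thesis using eb(1) form_symB(1)[OF fin pos eb(3), where Q=Q] form by simp
qed

lemma ev_upper:
  assumes rev: "reversible S w Q" and form: "\<And>f. fform S w Q f \<le> fnorm S w f" and k: "k < card S"
  shows "eigenvalues_desc S Q ! k \<le> 1"
proof -
  obtain us where sp: "length us = card S" "length (eigenvalues_desc S Q) = card S"
     "orthonormal (card S) us" "sorted_wrt (\<ge>) (eigenvalues_desc S Q)"
     "\<forall>i<card S. symB S w Q *\<^sub>v (us ! i) = eigenvalues_desc S Q ! i \<cdot>\<^sub>v us ! i"
    using ev_spec[OF rev] by blast
  note eb = eig_bounds[OF symB_carrier[OF fin pos] sp(1) sp(3) sp(5) k]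
  show ?thesis using eb(1) eb(2) form_symB(1)[OF fin pos eb(3), where Q=Q] form_symB(2)[OF fin pos eb(3)] form[of "tof S w (us ! k)"] by simp
qed

end

definition ap :: "'a set \<Rightarrow> 'b set \<Rightarrow> ('a \<Rightarrow> 'b \<Rightarrow> real) \<Rightarrow> ('b \<Rightarrow> real) \<Rightarrow> 'a \<Rightarrow> real" where
  "ap S1 S2 X g = (\<lambda>a. if a \<in> S1 then \<Sum>b\<in>S2. X a b * g b else 0)"

definition ip :: "'a set \<Rightarrow> ('a \<Rightarrow> real) \<Rightarrow> ('a \<Rightarrow> real) \<Rightarrow> ('a \<Rightarrow> real) \<Rightarrow> real" where
  "ip S w g h = (\<Sum>a\<in>S. w a * g a * h a)"

lemma ap_diff: "ap S1 S2 X (g - h) = ap S1 S2 X g - ap S1 S2 X h"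
  by (auto simp: ap_def fun_eq_iff algebra_simps sum_subtractf)

lemma ap_mmult: "ap S1 S3 (mmult S2 X Y) g = ap S1 S2 X (ap S2 S3 Y g)"
proof (rule ext)
  fix a
  show "ap S1 S3 (mmult S2 X Y) g a = ap S1 S2 X (ap S2 S3 Y g) a"
  proof (cases "a \<in> S1")
    case True
    have "(\<Sum>c\<in>S3. (\<Sum>b\<in>S2. X a b * Y b c) * g c) = (\<Sum>c\<in>S3. \<Sum>b\<in>S2. X a b * Y b c * g c)"
      by (simp add: sum_distrib_right)
    also have "\<dots> = (\<Sum>b\<in>S2. \<Sum>c\<in>S3. X a b * Y b c * g c)" by (rule sum.swap)
    also have "\<dots> = (\<Sum>b\<in>S2. X a b * (if b \<in> S2 then \<Sum>c\<in>S3. Y b c * g c else 0))"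
      by (intro sum.cong refl) (simp add: sum_distrib_left mult_ac)
    finally show ?thesis using True by (simp add: ap_def mmult_def)
  qed (simp add: ap_def)
qed

lemma ip_sym: "ip S w g h = ip S w h g" by (simp add: ip_def mult_ac)
lemma ip_diff_left: "ip S w (g - h) k = ip S w g k - ip S w h k"
  by (simp add: ip_def algebra_simps sum_subtractf)
lemma ip_diff_right: "ip S w k (g - h) = ip S w k g - ip S w k h"
  by (simp add: ip_def algebra_simps sum_subtractf)
lemma ip_nonneg: "\<forall>a\<in>S. w a \<ge> 0 \<Longrightarrow> ip S w g g \<ge> 0"
  unfolding ip_def by (intro sum_nonneg) (simp add: mult.assoc)

locale projs =
  fixes J :: "'a set" and \<nu> :: "'a \<Rightarrow> real" and T :: "nat \<Rightarrow> 'a \<Rightarrow> 'a \<Rightarrow> real" and m :: nat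
  assumes nu: "\<forall>a\<in>J. \<nu> a \<ge> 0"
    and sa: "\<And>i g h. i \<in> {1..m} \<Longrightarrow> ip J \<nu> (ap J J (T i) g) h = ip J \<nu> g (ap J J (T i) h)"
    and idem: "\<And>i g. i \<in> {1..m} \<Longrightarrow> ap J J (T i) (ap J J (T i) g) = ap J J (T i) g"
    and comm: "\<And>i j g. i \<in> {1..m} \<Longrightarrow> j \<in> {1..m} \<Longrightarrow>
                 ap J J (T i) (ap J J (T j) g) = ap J J (T j) (ap J J (T i) g)"
begin

abbreviation A where "A i \<equiv> ap J J (T i)"

definition pr :: "nat \<Rightarrow> ('a \<Rightarrow> real) \<Rightarrow> 'a \<Rightarrow> real" where
  "pr k g = foldr (\<lambda>i h. A i h) [1..<k+1] g"

lemma pr0[simp]: "pr 0 g = g" by (simp add: pr_def)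
lemma prSuc: "pr (Suc k) g = pr k (A (Suc k) g)" by (simp add: pr_def)

lemma pr_diff: "pr k (g - h) = pr k g - pr k h"
  by (induction k arbitrary: g h) (simp_all add: prSuc ap_diff)

lemma pr_comm: "j \<in> {1..m} \<Longrightarrow> k \<le> m \<Longrightarrow> pr k (A j g) = A j (pr k g)"
proof (induction k arbitrary: g)
  case 0 then show ?case by simp
next
  case (Suc k)
  have "pr (Suc k) (A j g) = pr k (A (Suc k) (A j g))" by (simp add: prSuc)
  also have "\<dots> = pr k (A j (A (Suc k) g))" using comm[of "Suc k" j g] Suc.prems by simp
  also have "\<dots> = A j (pr k (A (Suc k) g))" using Suc by simp
  finally show ?case by (simp add: prSuc)
qed

lemma pr_sa: "k \<le> m \<Longrightarrow> ip J \<nu> (pr k g) h = ip J \<nu> g (pr k h)"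
proof (induction k arbitrary: g h)
  case 0 then show ?case by simp
next
  case (Suc k)
  have "ip J \<nu> (pr (Suc k) g) h = ip J \<nu> (pr k (A (Suc k) g)) h" by (simp add: prSuc)
  also have "\<dots> = ip J \<nu> (A (Suc k) g) (pr k h)" using Suc by simp
  also have "\<dots> = ip J \<nu> g (A (Suc k) (pr k h))" using sa[of "Suc k"] Suc.prems by simp
  also have "\<dots> = ip J \<nu> g (pr (Suc k) h)" using pr_comm[of "Suc k" k h] Suc.prems by (simp add: prSuc)
  finally show ?case .
qed

lemma pr_absorb: "i \<in> {1..k} \<Longrightarrow> k \<le> m \<Longrightarrow> pr k (A i g) = pr k g"
proof (induction k arbitrary: g)
  case 0 then show ?case by simp
next
  case (Suc k)
  show ?case
  proof (cases "i = Suc k")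
    case True
    then show ?thesis using idem[of i g] Suc.prems by (simp add: prSuc)
  next
    case False
    then have i: "i \<in> {1..k}" using Suc.prems by auto
    have "pr (Suc k) (A i g) = pr k (A (Suc k) (A i g))" by (simp add: prSuc)
    also have "\<dots> = pr k (A i (A (Suc k) g))" using comm[of "Suc k" i g] Suc.prems i by simp
    also have "\<dots> = pr k (A (Suc k) g)" using Suc.IH[OF i] Suc.prems by simp
    finally show ?thesis by (simp add: prSuc)
  qed
qed

lemma pr_idem: "j \<le> k \<Longrightarrow> k \<le> m \<Longrightarrow> pr k (pr j g) = pr k g"
proof (induction j arbitrary: g)
  case 0 then show ?case by simp
next
  case (Suc j)
  have "pr k (pr (Suc j) g) = pr k (pr j (A (Suc j) g))" by (simp add: prSuc)
  also have "\<dots> = pr k (A (Suc j) g)" using Suc by simp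
  also have "\<dots> = pr k g" using pr_absorb[of "Suc j" k g] Suc.prems by simp
  finally show ?case .
qed

lemma A_pyth: "i \<in> {1..m} \<Longrightarrow> ip J \<nu> g g = ip J \<nu> (A i g) (A i g) + ip J \<nu> (g - A i g) (g - A i g)"
  and A_sq: "i \<in> {1..m} \<Longrightarrow> ip J \<nu> (A i g) g = ip J \<nu> (A i g) (A i g)"
proof -
  assume i: "i \<in> {1..m}"
  show sq: "ip J \<nu> (A i g) g = ip J \<nu> (A i g) (A i g)"
    using sa[OF i, of "A i g" g] idem[OF i, of g] by (simp add: ip_sym)
  show "ip J \<nu> g g = ip J \<nu> (A i g) (A i g) + ip J \<nu> (g - A i g) (g - A i g)"
    using sq by (simp add: ip_diff_left ip_diff_right ip_sym)
qed

lemma A_contr: "i \<in> {1..m} \<Longrightarrow> ip J \<nu> (A i g) (A i g) \<le> ip J \<nu> g g"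
  using A_pyth[of i g] ip_nonneg[OF nu, of "g - A i g"] by linarith

lemma pr_contr: "k \<le> m \<Longrightarrow> ip J \<nu> (pr k g) (pr k g) \<le> ip J \<nu> g g"
proof (induction k arbitrary: g)
  case 0 then show ?case by simp
next
  case (Suc k)
  have "ip J \<nu> (pr (Suc k) g) (pr (Suc k) g) = ip J \<nu> (pr k (A (Suc k) g)) (pr k (A (Suc k) g))"
    by (simp add: prSuc)
  also have "\<dots> \<le> ip J \<nu> (A (Suc k) g) (A (Suc k) g)" using Suc by simp
  also have "\<dots> \<le> ip J \<nu> g g" using A_contr[of "Suc k" g] Suc.prems by simp
  finally show ?case .
qed

lemma pr_sq: "k \<le> m \<Longrightarrow> ip J \<nu> (pr k g) g = ip J \<nu> (pr k g) (pr k g)"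
  using pr_sa[of k "pr k g" g] pr_idem[of k k g] by simp

lemma L1: "i \<in> {1..m} \<Longrightarrow> ip J \<nu> (pr m g) g \<le> ip J \<nu> (A i g) g"
proof -
  assume i: "i \<in> {1..m}"
  have "ip J \<nu> (pr m g) g = ip J \<nu> (pr m (A i g)) g" using pr_absorb[OF i] by simp
  also have "\<dots> = ip J \<nu> (A i g) (pr m g)" using pr_sa[of m "A i g" g] by simp
  also have "\<dots> = ip J \<nu> (A i g) (pr m (A i g))" using pr_absorb[OF i] by simp
  also have "\<dots> = ip J \<nu> (pr m (A i g)) (A i g)" by (simp add: ip_sym)
  also have "\<dots> = ip J \<nu> (pr m (A i g)) (pr m (A i g))" using pr_sq[of m "A i g"] by simp
  also have "\<dots> \<le> ip J \<nu> (A i g) (A i g)" using pr_contr[of m "A i g"] by simp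
  also have "\<dots> = ip J \<nu> (A i g) g" using A_sq[OF i] by simp
  finally show ?thesis .
qed

lemma L2: "k \<le> m \<Longrightarrow> ip J \<nu> g g - ip J \<nu> (pr k g) g \<le> (\<Sum>i=1..k. ip J \<nu> g g - ip J \<nu> (A i g) g)"
proof (induction k)
  case 0 then show ?case by simp
next
  case (Suc k)
  let ?T = "A (Suc k)"
  have i: "Suc k \<in> {1..m}" using Suc.prems by simp
  have k: "k \<le> m" using Suc.prems by simp
  have split: "pr k (g - ?T g) = pr k g - pr k (?T g)" using pr_diff[of k g "?T g"] by simp
  have orth: "ip J \<nu> (pr k (?T g)) (pr k (g - ?T g)) = 0"
  proof -
    have "ip J \<nu> (pr k (?T g)) (pr k (g - ?T g)) = ip J \<nu> (?T g) (pr k (pr k (g - ?T g)))"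
      using pr_sa[OF k] by simp
    also have "\<dots> = ip J \<nu> (?T g) (pr k (g - ?T g))" using pr_idem[OF order_refl k] by simp
    also have "\<dots> = ip J \<nu> (pr k (?T g)) (g - ?T g)" using pr_sa[OF k] by simp
    also have "\<dots> = ip J \<nu> (?T (pr k g)) (g - ?T g)" using pr_comm[OF i k] by simp
    also have "\<dots> = ip J \<nu> (pr k g) (?T g - ?T (?T g))" using sa[OF i] by (simp add: ap_diff)
    also have "\<dots> = 0" using idem[OF i] by (simp add: ip_def)
    finally show ?thesis .
  qed
  have "ip J \<nu> (pr k g) (pr k g) = ip J \<nu> (pr k (?T g)) (pr k (?T g)) + ip J \<nu> (pr k (g - ?T g)) (pr k (g - ?T g))"
  proof -
    have o2: "ip J \<nu> (pr k (?T g)) (pr k g) = ip J \<nu> (pr k (?T g)) (pr k (?T g))"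
      using orth unfolding split ip_diff_right by simp
    show ?thesis unfolding split ip_diff_left ip_diff_right using o2 by (simp add: ip_sym)
  qed
  moreover have "ip J \<nu> (pr k (g - ?T g)) (pr k (g - ?T g)) \<le> ip J \<nu> (g - ?T g) (g - ?T g)"
    by (rule pr_contr[OF k])
  moreover have "ip J \<nu> (g - ?T g) (g - ?T g) = ip J \<nu> g g - ip J \<nu> (?T g) g"
    using A_pyth[OF i, of g] A_sq[OF i, of g] by simp
  moreover have "ip J \<nu> (pr (Suc k) g) g = ip J \<nu> (pr k (?T g)) (pr k (?T g))"
    using pr_sq[OF Suc.prems, of g] by (simp add: prSuc)
  moreover have "ip J \<nu> (pr k g) g = ip J \<nu> (pr k g) (pr k g)" by (rule pr_sq[OF k])
  ultimately show ?case using Suc.IH[OF k] by simp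
qed

end

lemma ap_cong: "(\<And>a b. a \<in> S1 \<Longrightarrow> b \<in> S2 \<Longrightarrow> X a b = Y a b) \<Longrightarrow> ap S1 S2 X = ap S1 S2 Y"
  by (auto simp: ap_def fun_eq_iff intro!: sum.cong)

lemma ap_sa: "reversible J w X \<Longrightarrow> ip J w (ap J J X g) h = ip J w g (ap J J X h)"
proof -
  assume rev: "reversible J w X"
  have "ip J w (ap J J X g) h = (\<Sum>a\<in>J. \<Sum>b\<in>J. w a * X a b * g b * h a)"
    by (simp add: ip_def ap_def sum_distrib_left sum_distrib_right mult_ac)
  also have "\<dots> = (\<Sum>b\<in>J. \<Sum>a\<in>J. w a * X a b * g b * h a)" by (rule sum.swap)
  also have "\<dots> = (\<Sum>b\<in>J. \<Sum>a\<in>J. w b * X b a * g b * h a)"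
    using rev unfolding reversible_def by (intro sum.cong refl) simp
  also have "\<dots> = ip J w g (ap J J X h)"
    by (simp add: ip_def ap_def sum_distrib_left sum_distrib_right mult_ac)
  finally show ?thesis .
qed

lemma ap_foldr: "ap J J (foldr (mmult J) (map T is) mid) g = foldr (\<lambda>i h. ap J J (T i) h) is (ap J J mid g)"
  by (induction "is") (simp_all add: ap_mmult)

lemma ap_mid: "finite J \<Longrightarrow> (\<And>x. x \<notin> J \<Longrightarrow> g x = 0) \<Longrightarrow> ap J J mid g = g"
proof (rule ext)
  fix a assume fin: "finite J" and g: "\<And>x. x \<notin> J \<Longrightarrow> g x = 0"
  show "ap J J mid g a = g a"
  proof (cases "a \<in> J")
    case True
    have "(\<Sum>b\<in>J. mid a b * g b) = (\<Sum>b\<in>J. if a = b then g b else 0)" by (intro sum.cong) (auto simp: mid_def)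
    also have "\<dots> = g a" using True fin by simp
    finally show ?thesis using True by (simp add: ap_def)
  qed (simp add: ap_def g)
qed

lemma fform_ip: "fform S w Q f = ip S w f (ap S S Q f)"
  unfolding fform_def ip_def ap_def by (intro sum.cong refl) simp

lemma fnorm_ip: "fnorm S w f = ip S w f f"
  unfolding fnorm_def ip_def by (simp add: power2_eq_square mult_ac)

theorem mainTheorem4:
  fixes V :: "'v set" and E :: "'v set set" and p q :: real and r m :: nat
    and P :: "'v set set \<Rightarrow> 'v set set \<Rightarrow> real"
    and M :: "'v set set \<Rightarrow> ('v \<Rightarrow> nat) \<times> 'v set set \<Rightarrow> real"
    and T :: "nat \<Rightarrow> ('v \<Rightarrow> nat) \<times> 'v set set \<Rightarrow> ('v \<Rightarrow> nat) \<times> 'v set set \<Rightarrow> real"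
  assumes graph: "finite_graph V E"
    and p: "0 < p" "p < 1" and q: "0 < q"
    and m: "m \<ge> 2"
    and P_ergodic: "ergodic_chain (Pow E) P"
    and P_rev: "reversible (Pow E) (rc_measure V E p q) P"
    and M_stoch: "stochastic (Pow E) ((V \<rightarrow>\<^sub>E {..<r}) \<times> Pow E) M"
    and M_supp: "\<forall>A\<in>Pow E. \<forall>\<sigma> B. (\<sigma>, B) \<in> (V \<rightarrow>\<^sub>E {..<r}) \<times> Pow E \<longrightarrow>
                   M A (\<sigma>, B) \<noteq> 0 \<longrightarrow> A = B"
    and T_stoch: "\<forall>i\<in>{1..m}. stochastic ((V \<rightarrow>\<^sub>E {..<r}) \<times> Pow E) ((V \<rightarrow>\<^sub>E {..<r}) \<times> Pow E) (T i)"
    and T_rev: "\<forall>i\<in>{1..m}. reversible ((V \<rightarrow>\<^sub>E {..<r}) \<times> Pow E)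
                   (push_measure (Pow E) (rc_measure V E p q) M) (T i)"
    and T_supp: "\<forall>i\<in>{1..m}. \<forall>\<sigma> A \<tau> B. (\<sigma>, A) \<in> (V \<rightarrow>\<^sub>E {..<r}) \<times> Pow E \<longrightarrow>
                   (\<tau>, B) \<in> (V \<rightarrow>\<^sub>E {..<r}) \<times> Pow E \<longrightarrow>
                   T i (\<sigma>, A) (\<tau>, B) \<noteq> 0 \<longrightarrow> \<sigma> = \<tau>"
    and Mstar_stoch: "stochastic ((V \<rightarrow>\<^sub>E {..<r}) \<times> Pow E) (Pow E)
                        (adjoint (Pow E) (rc_measure V E p q) M)"
    and P_eq: "\<forall>A\<in>Pow E. \<forall>B\<in>Pow E.
       P A B = mmult ((V \<rightarrow>\<^sub>E {..<r}) \<times> Pow E)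
                 (mmult ((V \<rightarrow>\<^sub>E {..<r}) \<times> Pow E) M
                    (mprod_list ((V \<rightarrow>\<^sub>E {..<r}) \<times> Pow E) (map T [1..<m+1])))
                 (adjoint (Pow E) (rc_measure V E p q) M) A B"
    and T_idem: "\<forall>i\<in>{1..m}. \<forall>x\<in>(V \<rightarrow>\<^sub>E {..<r}) \<times> Pow E. \<forall>y\<in>(V \<rightarrow>\<^sub>E {..<r}) \<times> Pow E.
                   mmult ((V \<rightarrow>\<^sub>E {..<r}) \<times> Pow E) (T i) (T i) x y = T i x y"
    and T_comm: "\<forall>i\<in>{1..m}. \<forall>j\<in>{1..m}. \<forall>x\<in>(V \<rightarrow>\<^sub>E {..<r}) \<times> Pow E. \<forall>y\<in>(V \<rightarrow>\<^sub>E {..<r}) \<times> Pow E.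
                   mmult ((V \<rightarrow>\<^sub>E {..<r}) \<times> Pow E) (T i) (T j) x y
                 = mmult ((V \<rightarrow>\<^sub>E {..<r}) \<times> Pow E) (T j) (T i) x y"
  shows "spectral_gap (Pow E)
            (mmult ((V \<rightarrow>\<^sub>E {..<r}) \<times> Pow E)
               (mmult ((V \<rightarrow>\<^sub>E {..<r}) \<times> Pow E) M
                  (\<lambda>x y. (1 / real m) * (\<Sum>i=1..m. T i x y)))
               (adjoint (Pow E) (rc_measure V E p q) M))
         \<le> spectral_gap (Pow E) P
       \<and> spectral_gap (Pow E) P
         \<le> 8 * real m * ln (real m) *
           spectral_gap (Pow E)
            (mmult ((V \<rightarrow>\<^sub>E {..<r}) \<times> Pow E)
               (mmult ((V \<rightarrow>\<^sub>E {..<r}) \<times> Pow E) M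
                  (\<lambda>x y. (1 / real m) * (\<Sum>i=1..m. T i x y)))
               (adjoint (Pow E) (rc_measure V E p q) M))"
proof -
  define S where "S = Pow E"
  define J where "J = (V \<rightarrow>\<^sub>E {..<r}) \<times> Pow E"
  define \<mu> where "\<mu> = rc_measure V E p q"
  define \<nu> where "\<nu> = push_measure (Pow E) \<mu> M"
  define Mst where "Mst = adjoint (Pow E) \<mu> M"
  define Tb where "Tb = (\<lambda>x y. (1 / real m) * (\<Sum>i=1..m. T i x y))"
  define PL where "PL = mmult J (mmult J M Tb) Mst"
  define Pi where "Pi = mprod_list J (map T [1..<m+1])"
  \<comment> \<open>finiteness\<close>
  have finV: "finite V" using graph unfolding finite_graph_def by simp
  have "E \<subseteq> Pow V" using graph unfolding finite_graph_def by auto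
  then have finE: "finite E" using finV finite_subset by blast
  have finS: "finite S" unfolding S_def using finE by simp
  have finJ: "finite J" unfolding J_def using finE finV by (intro finite_cartesian_product finite_PiE) auto
  have cardS: "card S \<ge> 1" using finS unfolding S_def by (metis Pow_bottom card_0_eq empty_iff less_one not_le)
  \<comment> \<open>positivity of mu\<close>
  have wpos: "rc_weight V E p q A > 0" for A
    unfolding rc_weight_def using p q by simp
  have mupos: "\<mu> A > 0" for A
  proof -
    have "(\<Sum>B\<in>Pow E. rc_weight V E p q B) > 0"
      using finE wpos by (intro sum_pos) auto
    then show ?thesis unfolding \<mu>_def rc_measure_def using wpos[of A] by simp
  qed
  have pos: "\<forall>a\<in>S. \<mu> a > 0" using mupos by simp
  have Mnn: "\<And>A x. A \<in> S \<Longrightarrow> x \<in> J \<Longrightarrow> M A x \<ge> 0"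
    using M_stoch unfolding stochastic_def S_def J_def by auto
  have Msum: "\<And>A. A \<in> S \<Longrightarrow> (\<Sum>x\<in>J. M A x) = 1"
    using M_stoch unfolding stochastic_def S_def J_def by auto
  have Msupp: "\<And>A x. A \<in> S \<Longrightarrow> x \<in> J \<Longrightarrow> M A x \<noteq> 0 \<Longrightarrow> A = snd x"
    using M_supp unfolding S_def J_def by (metis prod.collapse)
  have nu_def': "\<nu> x = (\<Sum>A\<in>S. \<mu> A * M A x)" for x unfolding \<nu>_def push_measure_def S_def ..
  have Mst_def': "Mst x B = \<mu> B * M B x / \<nu> x" for x B unfolding Mst_def adjoint_def \<nu>_def ..
  have nu_ne: "\<nu> x \<noteq> 0" if x: "x \<in> J" for x
  proof
    assume "\<nu> x = 0"
    then have "(\<Sum>B\<in>S. Mst x B) = 0" by (simp add: Mst_def')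
    moreover have "(\<Sum>B\<in>S. Mst x B) = 1" using Mstar_stoch x unfolding stochastic_def Mst_def S_def J_def \<mu>_def by auto
    ultimately show False by simp
  qed
  have nu_nn: "\<nu> x \<ge> 0" if "x \<in> J" for x
    unfolding nu_def' using Mnn that mupos by (intro sum_nonneg) (simp add: less_imp_le)
  have nu_pos: "\<forall>x\<in>J. \<nu> x > 0" using nu_ne nu_nn by (simp add: less_le)
  have Trev: "\<And>i. i \<in> {1..m} \<Longrightarrow> reversible J \<nu> (T i)"
    using T_rev unfolding J_def \<nu>_def \<mu>_def by auto
  have Tsa: "\<And>i g h. i \<in> {1..m} \<Longrightarrow> ip J \<nu> (ap J J (T i) g) h = ip J \<nu> g (ap J J (T i) h)"
    by (rule ap_sa[OF Trev])
  have Tidem: "\<And>i g. i \<in> {1..m} \<Longrightarrow> ap J J (T i) (ap J J (T i) g) = ap J J (T i) g"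
  proof -
    fix i g assume i: "i \<in> {1..m}"
    have e: "ap J J (mmult J (T i) (T i)) = ap J J (T i)"
    proof (rule ap_cong)
      fix a b assume "a \<in> J" "b \<in> J"
      then show "mmult J (T i) (T i) a b = T i a b" using T_idem i unfolding J_def by blast
    qed
    show "ap J J (T i) (ap J J (T i) g) = ap J J (T i) g" using e by (simp add: ap_mmult[symmetric])
  qed
  have Tcomm: "\<And>i j g. i \<in> {1..m} \<Longrightarrow> j \<in> {1..m} \<Longrightarrow>
       ap J J (T i) (ap J J (T j) g) = ap J J (T j) (ap J J (T i) g)"
  proof -
    fix i j g assume i: "i \<in> {1..m}" and j: "j \<in> {1..m}"
    have e: "ap J J (mmult J (T i) (T j)) = ap J J (mmult J (T j) (T i))"
    proof (rule ap_cong)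
      fix a b assume "a \<in> J" "b \<in> J"
      then show "mmult J (T i) (T j) a b = mmult J (T j) (T i) a b" using T_comm i j unfolding J_def by blast
    qed
    show "ap J J (T i) (ap J J (T j) g) = ap J J (T j) (ap J J (T i) g)"
      using e by (simp add: ap_mmult[symmetric])
  qed
  have loc: "projs J \<nu> T m" unfolding projs_def using nu_nn Tsa Tidem Tcomm by blast
  interpret pj: projs J \<nu> T m by (rule loc)
  \<comment> \<open>the lift M*\<close>
  define gf where "gf f = ap J S Mst f" for f :: "'v set set \<Rightarrow> real"
  have gf0: "\<And>f x. x \<notin> J \<Longrightarrow> gf f x = 0" unfolding gf_def ap_def by simp
  have gfv: "gf f x = f (snd x)" if x: "x \<in> J" for f x
  proof -
    obtain \<sigma> C where xC: "x = (\<sigma>, C)" by (cases x)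
    have C: "C \<in> S" using x xC unfolding J_def S_def by auto
    have z: "\<And>B. B \<in> S \<Longrightarrow> B \<noteq> C \<Longrightarrow> M B x = 0" using Msupp x xC by fastforce
    have "\<nu> x = (\<Sum>B\<in>S. \<mu> B * M B x)" by (rule nu_def')
    also have "\<dots> = \<mu> C * M C x"
      using finS C z by (subst sum.remove[OF finS C]) (auto intro!: sum.neutral)
    finally have nux: "\<nu> x = \<mu> C * M C x" .
    have "gf f x = (\<Sum>B\<in>S. \<mu> B * M B x / \<nu> x * f B)" unfolding gf_def ap_def using x by (simp add: Mst_def')
    also have "\<dots> = \<mu> C * M C x / \<nu> x * f C"
      using finS C z by (subst sum.remove[OF finS C]) (auto intro!: sum.neutral)
    also have "\<dots> = f C" using nux nu_ne[OF x] by simp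
    finally show ?thesis using xC by simp
  qed
  have MMst: "ap S J M (gf f) a = f a" if a: "a \<in> S" for f a
  proof -
    have "ap S J M (gf f) a = (\<Sum>x\<in>J. M a x * f (snd x))" using a gfv by (simp add: ap_def)
    also have "\<dots> = (\<Sum>x\<in>J. M a x * f a)"
      by (intro sum.cong refl) (metis Msupp a mult_zero_left)
    also have "\<dots> = f a" using Msum[OF a] by (simp add: sum_distrib_right[symmetric])
    finally show ?thesis .
  qed
  have adj: "ip S \<mu> f (ap S J M h) = ip J \<nu> (gf f) h" for f h
  proof -
    have "ip S \<mu> f (ap S J M h) = (\<Sum>a\<in>S. \<Sum>x\<in>J. \<mu> a * M a x * f a * h x)"
      by (simp add: ip_def ap_def sum_distrib_left mult_ac)
    also have "\<dots> = (\<Sum>x\<in>J. \<Sum>a\<in>S. \<mu> a * M a x * f a * h x)" by (rule sum.swap)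
    also have "\<dots> = ip J \<nu> (gf f) h"
      unfolding ip_def gf_def ap_def
    proof (intro sum.cong refl)
      fix x assume x: "x \<in> J"
      show "(\<Sum>a\<in>S. \<mu> a * M a x * f a * h x) = \<nu> x * (if x \<in> J then \<Sum>b\<in>S. Mst x b * f b else 0) * h x"
        using x nu_ne[OF x] by (simp add: Mst_def' sum_distrib_left sum_distrib_right mult_ac)
    qed
    finally show ?thesis .
  qed
  have apPi: "ap J J Pi (gf f) = pj.pr m (gf f)" for f
  proof -
    have "ap J J mid (gf f) = gf f" by (rule ap_mid[OF finJ]) (rule gf0)
    then show ?thesis unfolding Pi_def mprod_list_def ap_foldr pj.pr_def by simp
  qed
  have eP: "ap S S P = ap S S (mmult J (mmult J M Pi) Mst)"
  proof (rule ap_cong)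
    fix a b assume "a \<in> S" "b \<in> S"
    then show "P a b = mmult J (mmult J M Pi) Mst a b"
      using P_eq unfolding S_def J_def Pi_def Mst_def \<mu>_def by blast
  qed
  have apP: "ap S S P f = ap S J M (pj.pr m (gf f))" for f
    unfolding eP ap_mmult gf_def[symmetric] apPi ..
  have apPL: "ap S S PL f = ap S J M (ap J J Tb (gf f))" for f
    unfolding PL_def ap_mmult gf_def[symmetric] ..
  have Tbip: "ip J \<nu> g (ap J J Tb g) = (1 / real m) * (\<Sum>i=1..m. ip J \<nu> (ap J J (T i) g) g)" for g
  proof -
    have "ip J \<nu> g (ap J J Tb g) = (\<Sum>a\<in>J. \<Sum>i=1..m. \<Sum>b\<in>J. (1 / real m) * (\<nu> a * g a * T i a b * g b))"
      unfolding ip_def ap_def Tb_def by (intro sum.cong refl) (simp add: sum_distrib_left sum_distrib_right mult_ac, rule sum.swap)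
    also have "\<dots> = (\<Sum>i=1..m. \<Sum>a\<in>J. \<Sum>b\<in>J. (1 / real m) * (\<nu> a * g a * T i a b * g b))" by (rule sum.swap)
    also have "\<dots> = (1 / real m) * (\<Sum>i=1..m. ip J \<nu> (ap J J (T i) g) g)"
      unfolding ip_def ap_def by (simp add: sum_distrib_left sum_distrib_right mult_ac)
    finally show ?thesis .
  qed
  have fP: "fform S \<mu> P f = ip J \<nu> (pj.pr m (gf f)) (gf f)" for f
    unfolding fform_ip apP adj by (simp add: ip_sym)
  have fPL: "fform S \<mu> PL f = (1 / real m) * (\<Sum>i=1..m. ip J \<nu> (ap J J (T i) (gf f)) (gf f))" for f
    unfolding fform_ip apPL adj Tbip ..
  have fN: "fnorm S \<mu> f = ip J \<nu> (gf f) (gf f)" for f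
  proof -
    have "fnorm S \<mu> f = ip S \<mu> f (ap S J M (gf f))" unfolding fnorm_ip ip_def
      using MMst by (intro sum.cong refl) simp
    then show ?thesis using adj by simp
  qed
  have mpos: "real m > 0" using m by simp
  have F1: "fform S \<mu> P f \<le> 1 * fform S \<mu> PL f + 0 * fnorm S \<mu> f" for f
  proof -
    let ?g = "gf f"
    have "(\<Sum>i=1..m. ip J \<nu> (pj.pr m ?g) ?g) \<le> (\<Sum>i=1..m. ip J \<nu> (ap J J (T i) ?g) ?g)"
      by (intro sum_mono pj.L1)
    then have "real m * ip J \<nu> (pj.pr m ?g) ?g \<le> (\<Sum>i=1..m. ip J \<nu> (ap J J (T i) ?g) ?g)" by simp
    then show ?thesis unfolding fP fPL using mpos by (simp add: field_simps)
  qed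
  have F2: "fform S \<mu> PL f \<le> (1 / real m) * fform S \<mu> P f + (1 - 1 / real m) * fnorm S \<mu> f" for f
  proof -
    let ?g = "gf f"
    have "ip J \<nu> ?g ?g - ip J \<nu> (pj.pr m ?g) ?g \<le> (\<Sum>i=1..m. ip J \<nu> ?g ?g - ip J \<nu> (ap J J (T i) ?g) ?g)"
      by (rule pj.L2) simp
    also have "\<dots> = real m * ip J \<nu> ?g ?g - (\<Sum>i=1..m. ip J \<nu> (ap J J (T i) ?g) ?g)"
      by (simp add: sum_subtractf)
    finally have "(\<Sum>i=1..m. ip J \<nu> (ap J J (T i) ?g) ?g) \<le> (real m - 1) * ip J \<nu> ?g ?g + ip J \<nu> (pj.pr m ?g) ?g"
      by (simp add: algebra_simps)
    then show ?thesis unfolding fP fPL fN using mpos by (simp add: field_simps)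
  qed
  have F3: "0 \<le> fform S \<mu> P f" for f
    unfolding fP using pj.pr_sq[of m "gf f"] ip_nonneg[OF pj.nu] by simp
  have Ai: "0 \<le> ip J \<nu> (ap J J (T i) g) g \<and> ip J \<nu> (ap J J (T i) g) g \<le> ip J \<nu> g g" if "i \<in> {1..m}" for i g
    using pj.A_sq[OF that, of g] pj.A_contr[OF that, of g] ip_nonneg[OF pj.nu, of "ap J J (T i) g"] by simp
  have F4: "fform S \<mu> PL f \<le> fnorm S \<mu> f" for f
  proof -
    have "(\<Sum>i=1..m. ip J \<nu> (ap J J (T i) (gf f)) (gf f)) \<le> (\<Sum>i=1..m. ip J \<nu> (gf f) (gf f))"
      using Ai by (intro sum_mono) auto
    then show ?thesis unfolding fPL fN using mpos by (simp add: field_simps)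
  qed
  have F5: "0 \<le> fform S \<mu> PL f" for f
  proof -
    have "0 \<le> (\<Sum>i=1..m. ip J \<nu> (ap J J (T i) (gf f)) (gf f))"
      using Ai by (intro sum_nonneg) auto
    then show ?thesis unfolding fPL using mpos by simp
  qed
  have Tbrev: "reversible J \<nu> Tb"
    unfolding reversible_def Tb_def
  proof (intro ballI)
    fix x y assume x: "x \<in> J" and y: "y \<in> J"
    have "\<nu> x * (1 / real m * (\<Sum>i = 1..m. T i x y)) = 1 / real m * (\<Sum>i = 1..m. \<nu> x * T i x y)"
      by (simp add: sum_distrib_left)
    also have "\<dots> = 1 / real m * (\<Sum>i = 1..m. \<nu> y * T i y x)"
      using Trev x y unfolding reversible_def by simp
    also have "\<dots> = \<nu> y * (1 / real m * (\<Sum>i = 1..m. T i y x))" by (simp add: sum_distrib_left)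
    finally show "\<nu> x * (1 / real m * (\<Sum>i = 1..m. T i x y)) = \<nu> y * (1 / real m * (\<Sum>i = 1..m. T i y x))" .
  qed
  have PLrev: "reversible S \<mu> PL"
    unfolding reversible_def
  proof (intro ballI)
    fix a b assume a: "a \<in> S" and b: "b \<in> S"
    define ind where "ind c = (\<lambda>x. if x = c then 1 else (0::real))" for c :: "'v set set"
    have e: "ip S \<mu> (ind c) (ap S S PL (ind d)) = \<mu> c * PL c d" if c: "c \<in> S" and d: "d \<in> S" for c d
    proof -
      have "(\<Sum>b\<in>S. PL c b * ind d b) = (\<Sum>b\<in>S. if b = d then PL c b else 0)"
        by (intro sum.cong) (auto simp: ind_def)
      then have 1: "ap S S PL (ind d) c = PL c d" using c d finS by (simp add: ap_def)
      have "ip S \<mu> (ind c) (ap S S PL (ind d)) = (\<Sum>x\<in>S. if x = c then \<mu> c * PL c d else 0)"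
        unfolding ip_def using 1 by (intro sum.cong) (auto simp: ind_def)
      then show ?thesis using c finS by simp
    qed
    have "\<mu> a * PL a b = ip J \<nu> (gf (ind a)) (ap J J Tb (gf (ind b)))"
      using e[OF a b] unfolding apPL adj by simp
    also have "\<dots> = ip J \<nu> (gf (ind b)) (ap J J Tb (gf (ind a)))"
      using ap_sa[OF Tbrev] ip_sym by metis
    also have "\<dots> = \<mu> b * PL b a" using e[OF b a] unfolding apPL adj by simp
    finally show "\<mu> a * PL a b = \<mu> b * PL b a" .
  qed
  have Prev: "reversible S \<mu> P" using P_rev unfolding S_def \<mu>_def .
  define N where "N = card S"
  define eP where "eP = eigenvalues_desc S P"
  define eL where "eL = eigenvalues_desc S PL"
  have lP: "length eP = N" "sorted_wrt (\<ge>) eP" using ev_len[OF finS pos Prev] eP_def N_def by auto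
  have lL: "length eL = N" "sorted_wrt (\<ge>) eL" using ev_len[OF finS pos PLrev] eL_def N_def by auto
  have C1: "eP ! k \<le> eL ! k" if "k < N" for k
    using ev_compare[OF finS pos Prev PLrev _ F1, of k] that eP_def eL_def N_def by simp
  have C2: "eL ! k \<le> (1 / real m) * eP ! k + (1 - 1 / real m)" if "k < N" for k
    using ev_compare[OF finS pos PLrev Prev _ F2, of k] that eL_def eP_def N_def mpos by simp
  have LP: "0 \<le> eP ! k" if "k < N" for k using ev_lower[OF finS pos Prev F3, of k] that eP_def N_def by simp
  have LL: "0 \<le> eL ! k" if "k < N" for k using ev_lower[OF finS pos PLrev F5, of k] that eL_def N_def by simp
  have UL: "eL ! k \<le> 1" if "k < N" for k using ev_upper[OF finS pos PLrev F4, of k] that eL_def N_def by simp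
  have ln2: "ln (real m) \<ge> 1 / 2"
  proof -
    have "1 / 2 \<le> ln (2::real)" using ln_add1_ge[of "1::real"] by simp
    also have "\<dots> \<le> ln (real m)" using m by simp
    finally show ?thesis .
  qed
  have big: "real m \<le> 8 * real m * ln (real m)" using ln2 mpos by (simp add: field_simps)
  have gapform: "spectral_gap S Q = 1 - ls ! 1"
    if "ls = eigenvalues_desc S Q" "length ls = N" "sorted_wrt (\<ge>) ls" "N \<ge> 2" "\<And>k. k < N \<Longrightarrow> 0 \<le> ls ! k"
    for Q ls
  proof -
    have "ls ! (N - 1) \<le> ls ! 1"
    proof (cases "N - 1 = 1")
      case False
      then show ?thesis using sorted_wrt_nth_less[OF that(3), of 1 "N - 1"] that(2,4) by simp
    qed simp
    moreover have "0 \<le> ls ! (N - 1)" using that(4,5) by simp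
    ultimately show ?thesis unfolding spectral_gap_def Let_def using that by simp
  qed
  have goal: "spectral_gap S PL \<le> spectral_gap S P \<and> spectral_gap S P \<le> 8 * real m * ln (real m) * spectral_gap S PL"
  proof (cases "N \<ge> 2")
    case True
    have gP: "spectral_gap S P = 1 - eP ! 1" using gapform[OF eP_def lP(1) lP(2) True LP] .
    have gL: "spectral_gap S PL = 1 - eL ! 1" using gapform[OF eL_def lL(1) lL(2) True LL] .
    have 1: "1 < N" using True by simp
    have a: "eP ! 1 \<le> eL ! 1" using C1[OF 1] .
    have b: "eL ! 1 \<le> (1 / real m) * eP ! 1 + (1 - 1 / real m)" using C2[OF 1] .
    have c: "eL ! 1 \<le> 1" using UL[OF 1] .
    have d: "1 - eP ! 1 \<le> real m * (1 - eL ! 1)"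
    proof -
      have "real m * eL ! 1 \<le> real m * ((1 / real m) * eP ! 1 + (1 - 1 / real m))"
        by (rule mult_left_mono[OF b]) (use mpos in simp)
      also have "\<dots> = eP ! 1 + (real m - 1)" using mpos by (simp add: field_simps)
      finally have "real m * eL ! 1 \<le> eP ! 1 + (real m - 1)" .
      then show ?thesis by (simp add: algebra_simps)
    qed
    have e: "real m * (1 - eL ! 1) \<le> 8 * real m * ln (real m) * (1 - eL ! 1)"
      using big c by (intro mult_right_mono) auto
    show ?thesis unfolding gP gL using a d e by linarith
  next
    case False
    then have "spectral_gap S P = 1" "spectral_gap S PL = 1"
      unfolding spectral_gap_def Let_def using lP lL eP_def eL_def by auto
    moreover have "1 \<le> 8 * real m * ln (real m)" using big m by linarith
    ultimately show ?thesis by simp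
  qed
  then show ?thesis unfolding PL_def Tb_def J_def Mst_def \<mu>_def S_def .
qed

end
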